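(* Let $\mathcal{T}=(V,A,E,f,q,v_0)$ be a decorated pseudo-rooted tree such that $f(\alpha)=1$ for every $\alpha\in A\setminus A_0$, and let $\mathscr{P}$ be a partition of $A\setminus A_0$. Then (a) $M(\mathcal{T})=\sum_{\alpha\in A\setminus A_0}M(\mathcal{T}_\alpha)-I(A\setminus A_0,A\setminus A_0)$; (b) $M(\mathcal{T})=\sum_{X\in\mathscr{P}}M(\mathcal{T}_X)-\sum_{(X,Y)\in\mathscr{P}^2,\,X\ne Y}I(X,Y)$.
   Context: A graph is a pair $(X_0,X_1)$ of finite sets such that each element of $X_1$ (an edge) is a $2$-element subset of $X_0$; elements of $X_0$ are cells. The valency $\delta_x$ of a cell is the number of edges containing it. A path is a tuple $(x_0,\dots,x_n)$ ($n\ge0$) of cells with $\{x_i,x_{i+1}\}$ an edge for each $i<n$, these edges pairwise distinct; a cell/edge is in the path if it is some $x_i$ / some $\{x_i,x_{i+1}\}$. The graph is a tree if any two cells $x,y$ are joined by a unique path $\gamma_{x,y}$. A decorated tree is $(V,A,E,f,q)$ with $V$ (vertices), $A$ (arrows) finite disjoint sets, $(V\cup A,E)$ a tree, every arrow of valency $1$, $f:A\to\mathbb{Z}$, $q(e,x)\in\mathbb{Z}$ for each $e\in E$, $x\in e$, with $q(e,\alpha)=1$ for $\alpha\in A$, and for each $v\in V$ and distinct edges $e,e'\ni v$, $\gcd(q(e,v),q(e',v))=1$. $A_0=\{\alpha\in A:f(\alpha)=0\}$. An edge $\varepsilon$ is incident to a path $\gamma$ if it is not in $\gamma$ but contains a cell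 $u$ of $\gamma$; $q(\varepsilon,\gamma):=q(\varepsilon,u)$. For $v\ne\alpha$, $v\in V\cup A$, $\alpha\in A$: $x_{v,\alpha}=f(\alpha)\prod_\varepsilon q(\varepsilon,\gamma_{v,\alpha})$ over edges incident to $\gamma_{v,\alpha}$ (empty product $=1$). For $v\in V\cup A_0$, $N_v=\sum_{\alpha\in A\setminus A_0}x_{v,\alpha}$; $M(\mathcal{T})=-\sum_{v\in V\cup A_0}N_v(\delta_v-2)$. For a path $\gamma=(x_0,\dots,x_n)$, $n>0$, and a cell $u$ of $\gamma$, $Q(\gamma,u)=\prod q(\varepsilon,u)$ over edges $\varepsilon\ni u$ not in $\gamma$; $Q^*(\gamma)=\prod_{0<i<n}Q(\gamma,x_i)$. For $X,Y\subseteq A\setminus A_0$, $I(X,Y)=\sum_{(\alpha,\beta)\in X\times Y,\,\alpha\ne\beta}Q^*(\gamma_{\alpha,\beta})f(\alpha)f(\beta)$. A pseudo-root of $(V,A,E,f,q)$ is a vertex $v_0$ with $q(e,v_0)=1$ for all edges $e\ni v_0$, such that for every $v\in V\setminus\{v_0\}$ at most one edge $e\ni v$ not in $\gamma_{v_0,v}$ has $q(e,v)\ne1$. A decorated pseudo-rooted tree is $(V,A,E,f,q,v_0)$ with $v_0$ a pseudo-root. For nonempty $X\subseteq A\setminus A_0$, $\mathcal{T}_X$: let $\mathcal{T}'_X$ have arrow set $X$, vertices those of $\mathcal{T}$ on some $\gamma_{v_0,\alpha}$ ($\alpha\in X$), edges those of $\mathcal{T}$ in some $\gamma_{v_0,\alpha}$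 ($\alpha\in X$), decorations as in $\mathcal{T}$; for each vertex $v$ of $\mathcal{T}'_X$ put $b_v=\prod q(e,v)$ over edges $e$ of $\mathcal{T}$ containing $v$ not in $\mathcal{T}'_X$, and if $b_v\ne1$ add an arrow $\alpha_v$ with $f(\alpha_v)=0$ and edge $\{v,\alpha_v\}$ decorated $b_v$ near $v$, $1$ near $\alpha_v$. The result, pseudo-rooted at $v_0$, is $\mathcal{T}_X$; $\mathcal{T}_\alpha:=\mathcal{T}_{\{\alpha\}}$. Partitions consist of nonempty sets. *)

theory Defs
  imports Main "HOL-Library.Disjoint_Sets"
begin

definition is_graph :: "'a set \<Rightarrow> 'a set set \<Rightarrow> bool" where
  "is_graph X0 X1 \<longleftrightarrow> finite X0 \<and> finite X1 \<and> (\<forall>e\<in>X1. e \<subseteq> X0 \<and> card e = 2)"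

definition valency :: "'a set set \<Rightarrow> 'a \<Rightarrow> nat" where
  "valency X1 x = card {e \<in> X1. x \<in> e}"

definition path_edges :: "'a list \<Rightarrow> 'a set list" where
  "path_edges p = map (\<lambda>i. {p ! i, p ! Suc i}) [0..<length p - 1]"

definition is_path :: "'a set \<Rightarrow> 'a set set \<Rightarrow> 'a list \<Rightarrow> bool" where
  "is_path X0 X1 p \<longleftrightarrow> p \<noteq> [] \<and> set p \<subseteq> X0 \<and> set (path_edges p) \<subseteq> X1
     \<and> distinct (path_edges p)"

definition is_tree :: "'a set \<Rightarrow> 'a set set \<Rightarrow> bool" where
  "is_tree X0 X1 \<longleftrightarrow> is_graph X0 X1 \<and>
     (\<forall>x\<in>X0. \<forall>y\<in>X0. \<exists>!p. is_path X0 X1 p \<and> hd p = x \<and> last p = y)"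

definition gpath :: "'a set \<Rightarrow> 'a set set \<Rightarrow> 'a \<Rightarrow> 'a \<Rightarrow> 'a list" where
  "gpath X0 X1 x y = (THE p. is_path X0 X1 p \<and> hd p = x \<and> last p = y)"

text \<open>Decorated tree (V, A, E, f, q); f and q are only meaningful on A, resp. on pairs (e, x) with
  e in E and x in e.\<close>
definition decorated_tree ::
  "'a set \<Rightarrow> 'a set \<Rightarrow> 'a set set \<Rightarrow> ('a \<Rightarrow> int) \<Rightarrow> ('a set \<Rightarrow> 'a \<Rightarrow> int) \<Rightarrow> bool" where
  "decorated_tree V A E f q \<longleftrightarrow>
     finite V \<and> finite A \<and> V \<inter> A = {} \<and> is_tree (V \<union> A) E \<and>
     (\<forall>\<alpha>\<in>A. valency E \<alpha> = 1) \<and>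
     (\<forall>e\<in>E. \<forall>\<alpha>\<in>A. \<alpha> \<in> e \<longrightarrow> q e \<alpha> = 1) \<and>
     (\<forall>v\<in>V. \<forall>e\<in>E. \<forall>e'\<in>E. v \<in> e \<longrightarrow> v \<in> e' \<longrightarrow> e \<noteq> e' \<longrightarrow> gcd (q e v) (q e' v) = 1)"

definition zero_arrows :: "'a set \<Rightarrow> ('a \<Rightarrow> int) \<Rightarrow> 'a set" where
  "zero_arrows A f = {\<alpha> \<in> A. f \<alpha> = 0}"

definition incident_edges :: "'a set set \<Rightarrow> 'a list \<Rightarrow> 'a set set" where
  "incident_edges E \<gamma> = {\<epsilon> \<in> E. \<epsilon> \<notin> set (path_edges \<gamma>) \<and> (\<exists>u\<in>set \<gamma>. u \<in> \<epsilon>)}"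

definition q_path :: "('a set \<Rightarrow> 'a \<Rightarrow> int) \<Rightarrow> 'a set \<Rightarrow> 'a list \<Rightarrow> int" where
  "q_path q \<epsilon> \<gamma> = q \<epsilon> (THE u. u \<in> set \<gamma> \<and> u \<in> \<epsilon>)"

definition xcoef ::
  "'a set \<Rightarrow> 'a set \<Rightarrow> 'a set set \<Rightarrow> ('a \<Rightarrow> int) \<Rightarrow> ('a set \<Rightarrow> 'a \<Rightarrow> int) \<Rightarrow> 'a \<Rightarrow> 'a \<Rightarrow> int" where
  "xcoef V A E f q v \<alpha> =
     (let \<gamma> = gpath (V \<union> A) E v \<alpha> in f \<alpha> * (\<Prod>\<epsilon>\<in>incident_edges E \<gamma>. q_path q \<epsilon> \<gamma>))"

definition Ncoef ::
  "'a set \<Rightarrow> 'a set \<Rightarrow> 'a set set \<Rightarrow> ('a \<Rightarrow> int) \<Rightarrow> ('a set \<Rightarrow> 'a \<Rightarrow> int) \<Rightarrow> 'a \<Rightarrow> int" where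
  "Ncoef V A E f q v = (\<Sum>\<alpha>\<in>A - zero_arrows A f. xcoef V A E f q v \<alpha>)"

definition Mval ::
  "'a set \<Rightarrow> 'a set \<Rightarrow> 'a set set \<Rightarrow> ('a \<Rightarrow> int) \<Rightarrow> ('a set \<Rightarrow> 'a \<Rightarrow> int) \<Rightarrow> int" where
  "Mval V A E f q =
     - (\<Sum>v\<in>V \<union> zero_arrows A f. Ncoef V A E f q v * (int (valency E v) - 2))"

definition Qcell :: "'a set set \<Rightarrow> ('a set \<Rightarrow> 'a \<Rightarrow> int) \<Rightarrow> 'a list \<Rightarrow> 'a \<Rightarrow> int" where
  "Qcell E q \<gamma> u = (\<Prod>\<epsilon>\<in>{\<epsilon> \<in> E. u \<in> \<epsilon> \<and> \<epsilon> \<notin> set (path_edges \<gamma>)}. q \<epsilon> u)"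

definition Qstar :: "'a set set \<Rightarrow> ('a set \<Rightarrow> 'a \<Rightarrow> int) \<Rightarrow> 'a list \<Rightarrow> int" where
  "Qstar E q \<gamma> = (\<Prod>i\<in>{0<..<length \<gamma> - 1}. Qcell E q \<gamma> (\<gamma> ! i))"

definition Iform ::
  "'a set \<Rightarrow> 'a set \<Rightarrow> 'a set set \<Rightarrow> ('a \<Rightarrow> int) \<Rightarrow> ('a set \<Rightarrow> 'a \<Rightarrow> int) \<Rightarrow> 'a set \<Rightarrow> 'a set \<Rightarrow> int" where
  "Iform V A E f q X Y =
     (\<Sum>(\<alpha>, \<beta>)\<in>{(\<alpha>, \<beta>) \<in> X \<times> Y. \<alpha> \<noteq> \<beta>}. Qstar E q (gpath (V \<union> A) E \<alpha> \<beta>) * f \<alpha> * f \<beta>)"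

definition pseudo_root ::
  "'a set \<Rightarrow> 'a set \<Rightarrow> 'a set set \<Rightarrow> ('a set \<Rightarrow> 'a \<Rightarrow> int) \<Rightarrow> 'a \<Rightarrow> bool" where
  "pseudo_root V A E q v0 \<longleftrightarrow> v0 \<in> V \<and> (\<forall>e\<in>E. v0 \<in> e \<longrightarrow> q e v0 = 1) \<and>
     (\<forall>v\<in>V - {v0}. card {e \<in> E. v \<in> e \<and> e \<notin> set (path_edges (gpath (V \<union> A) E v0 v)) \<and> q e v \<noteq> 1} \<le> 1)"

definition decorated_pseudo_rooted_tree ::
  "'a set \<Rightarrow> 'a set \<Rightarrow> 'a set set \<Rightarrow> ('a \<Rightarrow> int) \<Rightarrow> ('a set \<Rightarrow> 'a \<Rightarrow> int) \<Rightarrow> 'a \<Rightarrow> bool" where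
  "decorated_pseudo_rooted_tree V A E f q v0 \<longleftrightarrow>
     decorated_tree V A E f q \<and> pseudo_root V A E q v0"

text \<open>Cells of T_X live in type 'a + 'a: Inl c is the cell c of T, Inr v is the new arrow alpha_v.\<close>

definition subV :: "'a set \<Rightarrow> 'a set \<Rightarrow> 'a set set \<Rightarrow> 'a \<Rightarrow> 'a set \<Rightarrow> 'a set" where
  "subV V A E v0 X = {v \<in> V. \<exists>\<alpha>\<in>X. v \<in> set (gpath (V \<union> A) E v0 \<alpha>)}"

definition subE :: "'a set \<Rightarrow> 'a set \<Rightarrow> 'a set set \<Rightarrow> 'a \<Rightarrow> 'a set \<Rightarrow> 'a set set" where
  "subE V A E v0 X = {e \<in> E. \<exists>\<alpha>\<in>X. e \<in> set (path_edges (gpath (V \<union> A) E v0 \<alpha>))}"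

definition bcoef ::
  "'a set \<Rightarrow> 'a set \<Rightarrow> 'a set set \<Rightarrow> ('a set \<Rightarrow> 'a \<Rightarrow> int) \<Rightarrow> 'a \<Rightarrow> 'a set \<Rightarrow> 'a \<Rightarrow> int" where
  "bcoef V A E q v0 X v = (\<Prod>e\<in>{e \<in> E. v \<in> e \<and> e \<notin> subE V A E v0 X}. q e v)"

definition newarr_base ::
  "'a set \<Rightarrow> 'a set \<Rightarrow> 'a set set \<Rightarrow> ('a set \<Rightarrow> 'a \<Rightarrow> int) \<Rightarrow> 'a \<Rightarrow> 'a set \<Rightarrow> 'a set" where
  "newarr_base V A E q v0 X = {v \<in> subV V A E v0 X. bcoef V A E q v0 X v \<noteq> 1}"

definition TX_V :: "'a set \<Rightarrow> 'a set \<Rightarrow> 'a set set \<Rightarrow> 'a \<Rightarrow> 'a set \<Rightarrow> ('a + 'a) set" where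
  "TX_V V A E v0 X = Inl ` subV V A E v0 X"

definition TX_A ::
  "'a set \<Rightarrow> 'a set \<Rightarrow> 'a set set \<Rightarrow> ('a set \<Rightarrow> 'a \<Rightarrow> int) \<Rightarrow> 'a \<Rightarrow> 'a set \<Rightarrow> ('a + 'a) set" where
  "TX_A V A E q v0 X = Inl ` X \<union> Inr ` newarr_base V A E q v0 X"

definition TX_E ::
  "'a set \<Rightarrow> 'a set \<Rightarrow> 'a set set \<Rightarrow> ('a set \<Rightarrow> 'a \<Rightarrow> int) \<Rightarrow> 'a \<Rightarrow> 'a set \<Rightarrow> ('a + 'a) set set" where
  "TX_E V A E q v0 X = (\<lambda>e. Inl ` e) ` subE V A E v0 X
     \<union> (\<lambda>v. {Inl v, Inr v}) ` newarr_base V A E q v0 X"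

definition TX_f :: "('a \<Rightarrow> int) \<Rightarrow> ('a + 'a) \<Rightarrow> int" where
  "TX_f f c = (case c of Inl x \<Rightarrow> f x | Inr _ \<Rightarrow> 0)"

definition TX_q ::
  "'a set \<Rightarrow> 'a set \<Rightarrow> 'a set set \<Rightarrow> ('a set \<Rightarrow> 'a \<Rightarrow> int) \<Rightarrow> 'a \<Rightarrow> 'a set \<Rightarrow>
     ('a + 'a) set \<Rightarrow> ('a + 'a) \<Rightarrow> int" where
  "TX_q V A E q v0 X e c = (case c of
      Inr _ \<Rightarrow> 1
    | Inl x \<Rightarrow> (if Inr x \<in> e then bcoef V A E q v0 X x else q (Inl -` e) x))"

text \<open>M(T_X) (the value M does not depend on the pseudo-root).\<close>
definition M_sub ::
  "'a set \<Rightarrow> 'a set \<Rightarrow> 'a set set \<Rightarrow> ('a \<Rightarrow> int) \<Rightarrow> ('a set \<Rightarrow> 'a \<Rightarrow> int) \<Rightarrow> 'a \<Rightarrow> 'a set \<Rightarrow> int" where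
  "M_sub V A E f q v0 X =
     Mval (TX_V V A E v0 X) (TX_A V A E q v0 X) (TX_E V A E q v0 X) (TX_f f) (TX_q V A E q v0 X)"

end

theory Submission
  imports Defs
begin

lemma pe_Nil[simp]: "path_edges [] = []"
  by (simp add: path_edges_def)

lemma pe_single[simp]: "path_edges [x] = []"
  by (simp add: path_edges_def)

lemma pe_Cons2[simp]: "path_edges (x # y # p) = {x, y} # path_edges (y # p)"
proof -
  have "[0..<length (x # y # p) - 1] = 0 # map Suc [0..<length (y # p) - 1]"
    by (simp add: upt_conv_Cons map_Suc_upt del: upt_Suc)
  then show ?thesis by (simp add: path_edges_def)
qed

lemma pe_append: "path_edges (xs @ y # ys) = path_edges (xs @ [y]) @ path_edges (y # ys)"
proof (induction xs)
  case Nil then show ?case by simp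
next
  case (Cons a xs)
  then show ?case by (cases xs) auto
qed

lemma pe_map: "path_edges (map h p) = map (image h) (path_edges p)"
  by (induction p rule: induct_list012) auto

lemma pe_rev: "path_edges (rev p) = rev (path_edges p)"
proof (induction p rule: induct_list012)
  case (3 x y p)
  have "path_edges (rev (x # y # p)) = path_edges (rev p @ y # [x])" by simp
  also have "\<dots> = path_edges (rev (y # p)) @ [{y, x}]"
    by (subst pe_append) simp
  finally show ?case using 3 by (simp add: insert_commute)
qed auto

lemma pe_set: "e \<in> set (path_edges p) \<longleftrightarrow> (\<exists>i. Suc i < length p \<and> e = {p ! i, p ! Suc i})"
  unfolding path_edges_def by (force simp: less_diff_conv)

lemma pe_sub_set: "e \<in> set (path_edges p) \<Longrightarrow> e \<subseteq> set p"
  by (auto simp: pe_set)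

lemma ip_single[simp]: "is_path X0 X1 [x] \<longleftrightarrow> x \<in> X0"
  by (simp add: is_path_def)

lemma ip_Cons2: "is_path X0 X1 (x # y # p) \<longleftrightarrow>
   x \<in> X0 \<and> {x, y} \<in> X1 \<and> {x, y} \<notin> set (path_edges (y # p)) \<and> is_path X0 X1 (y # p)"
  by (auto simp: is_path_def)

lemma ip_rev[simp]: "is_path X0 X1 (rev p) \<longleftrightarrow> is_path X0 X1 p"
  by (auto simp: is_path_def pe_rev)

lemma ip_split: "is_path X0 X1 (xs @ y # ys) \<Longrightarrow> is_path X0 X1 (xs @ [y]) \<and> is_path X0 X1 (y # ys)"
  unfolding is_path_def pe_append[of xs y ys] by auto

lemma ip_prefix: "is_path X0 X1 (p @ r) \<Longrightarrow> p \<noteq> [] \<Longrightarrow> is_path X0 X1 p"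
proof -
  assume a: "is_path X0 X1 (p @ r)" "p \<noteq> []"
  show ?thesis
  proof (cases r)
    case Nil then show ?thesis using a by simp
  next
    case (Cons z r')
    have "p @ r = butlast p @ last p # r" using a(2) by simp
    then have "is_path X0 X1 (butlast p @ [last p])" using a ip_split by metis
    then show ?thesis using a(2) by simp
  qed
qed

lemma ip_suffix: "is_path X0 X1 (p @ r) \<Longrightarrow> r \<noteq> [] \<Longrightarrow> is_path X0 X1 r"
  using ip_prefix[of X0 X1 "rev r" "rev p"] by (metis ip_rev rev_append rev_is_Nil_conv)

lemma ip_sub: "is_path X0 X1 (xs @ ys @ zs) \<Longrightarrow> ys \<noteq> [] \<Longrightarrow> is_path X0 X1 ys"
  by (metis append_assoc ip_prefix ip_suffix)

lemma ip_concat: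
  assumes "is_path X0 X1 (xs @ [y])" "is_path X0 X1 (y # ys)"
    and "set xs \<inter> set (y # ys) = {}" and "\<forall>e\<in>X1. card e = 2"
  shows "is_path X0 X1 (xs @ y # ys)"
proof -
  have "set (path_edges (xs @ [y])) \<inter> set (path_edges (y # ys)) = {}"
  proof (rule ccontr)
    assume "\<not> ?thesis"
    then obtain e where e1: "e \<in> set (path_edges (xs @ [y]))" and e2: "e \<in> set (path_edges (y # ys))"
      by blast
    have "e \<subseteq> set (xs @ [y])" "e \<subseteq> set (y # ys)" using e1 e2 pe_sub_set by blast+
    then have "e \<subseteq> {y}" using assms(3) by auto
    moreover have "e \<in> X1" using e1 assms(1) unfolding is_path_def by auto
    ultimately have "card e \<le> 1" using card_mono[of "{y}" e] by auto
    then show False using assms(4) \<open>e \<in> X1\<close> by auto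
  qed
  then show ?thesis using assms(1,2) unfolding is_path_def pe_append[of xs y ys]
    by auto
qed


lemma sub_path:
  assumes "is_path X0 X1 p" "i \<le> j" "j < length p"
  shows "is_path X0 X1 (drop i (take (Suc j) p)) \<and> hd (drop i (take (Suc j) p)) = p ! i
    \<and> last (drop i (take (Suc j) p)) = p ! j \<and> length (drop i (take (Suc j) p)) = Suc j - i"
proof -
  let ?m = "drop i (take (Suc j) p)"
  have "take i (take (Suc j) p) = take i p" using assms(2) by (simp add: min_def)
  then have "take (Suc j) p = take i p @ ?m" by (metis append_take_drop_id)
  then have dec: "p = take i p @ ?m @ drop (Suc j) p" by (metis append_take_drop_id append_assoc)
  have ne: "?m \<noteq> []" using assms by simp
  have "is_path X0 X1 ?m" using ip_sub[of X0 X1 "take i p" ?m "drop (Suc j) p"] dec assms(1) ne by simp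
  moreover have "hd ?m = p ! i" using assms by (simp add: hd_drop_conv_nth)
  moreover have "last ?m = p ! j" using assms ne
    by (simp add: last_conv_nth)
  ultimately show ?thesis using assms by simp
qed

locale tree_ctx =
  fixes C :: "'a set" and E :: "'a set set"
  assumes tree: "is_tree C E"
begin

abbreviation gp where "gp \<equiv> gpath C E"

lemma fin_C: "finite C" and fin_E: "finite E"
  using tree by (auto simp: is_tree_def is_graph_def)

lemma edge_sub: "e \<in> E \<Longrightarrow> e \<subseteq> C" and edge_card: "e \<in> E \<Longrightarrow> card e = 2"
  using tree by (auto simp: is_tree_def is_graph_def)

lemma edge_ex: "e \<in> E \<Longrightarrow> \<exists>a b. a \<noteq> b \<and> e = {a, b}"
  using edge_card card_2_iff by metis

lemma edge_ne: "{a, b} \<in> E \<Longrightarrow> a \<noteq> b"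
  using edge_card by fastforce

lemma edge_in: "{a, b} \<in> E \<Longrightarrow> a \<in> C \<and> b \<in> C"
  using edge_sub by blast

lemma path_set: "is_path C E p \<Longrightarrow> set p \<subseteq> C"
  by (simp add: is_path_def)

lemma gp_path: "x \<in> C \<Longrightarrow> y \<in> C \<Longrightarrow> is_path C E (gp x y) \<and> hd (gp x y) = x \<and> last (gp x y) = y"
  unfolding gpath_def using tree theI'[of "\<lambda>p. is_path C E p \<and> hd p = x \<and> last p = y"]
  by (auto simp: is_tree_def)

lemma gp_eq: "is_path C E p \<Longrightarrow> hd p = x \<Longrightarrow> last p = y \<Longrightarrow> gp x y = p"
proof -
  assume a: "is_path C E p" "hd p = x" "last p = y"
  have ne: "p \<noteq> []" using a by (simp add: is_path_def)
  have "x \<in> C" "y \<in> C" using a ne path_set[OF a(1)] by (auto intro!: hd_in_set last_in_set)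
  then have "\<exists>!p. is_path C E p \<and> hd p = x \<and> last p = y" using tree by (auto simp: is_tree_def)
  then show ?thesis unfolding gpath_def using a the1_equality by blast
qed

lemma gp_ne: "x \<in> C \<Longrightarrow> y \<in> C \<Longrightarrow> gp x y \<noteq> []"
  using gp_path by (auto simp: is_path_def)

lemma gp_set: "x \<in> C \<Longrightarrow> y \<in> C \<Longrightarrow> set (gp x y) \<subseteq> C"
  using gp_path path_set by blast

lemma gp_self: "x \<in> C \<Longrightarrow> gp x x = [x]"
  by (rule gp_eq) auto

lemma gp_edge: "{a, b} \<in> E \<Longrightarrow> gp a b = [a, b]"
  using edge_in by (intro gp_eq) (auto simp: ip_Cons2)

lemma path_distinct: "is_path C E p \<Longrightarrow> distinct p"
proof (rule ccontr)
  assume a: "is_path C E p" "\<not> distinct p"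
  then obtain i j where ij: "i < j" "j < length p" "p ! i = p ! j"
    by (metis distinct_conv_nth linorder_neqE_nat)
  let ?m = "drop i (take (Suc j) p)"
  have m: "is_path C E ?m" "hd ?m = p ! i" "last ?m = p ! j" "length ?m = Suc j - i"
    using sub_path[OF a(1), of i j] ij by auto
  have "p ! i \<in> C" using path_set[OF a(1)] ij by (meson less_trans nth_mem subsetD)
  then have "gp (p ! i) (p ! i) = [p ! i]" by (rule gp_self)
  moreover have "gp (p ! i) (p ! i) = ?m" using gp_eq m ij by metis
  ultimately have "length ?m = 1" by simp
  then show False using m(4) ij by simp
qed

lemma gp_distinct: "x \<in> C \<Longrightarrow> y \<in> C \<Longrightarrow> distinct (gp x y)"
  using gp_path path_distinct by blast

lemma gp_rev: "x \<in> C \<Longrightarrow> y \<in> C \<Longrightarrow> gp y x = rev (gp x y)"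
  using gp_path gp_ne by (intro gp_eq) (auto simp: hd_rev last_rev)

lemma gp_split:
  assumes "x \<in> C" "y \<in> C" "gp x y = xs @ z # ys"
  shows "gp x z = xs @ [z] \<and> gp z y = z # ys"
proof -
  have p: "is_path C E (xs @ z # ys)" "hd (xs @ z # ys) = x" "last (xs @ z # ys) = y"
    using gp_path[OF assms(1,2)] assms(3) by auto
  have "is_path C E (xs @ [z]) \<and> is_path C E (z # ys)" using ip_split p(1) by metis
  moreover have "hd (xs @ [z]) = x" using p(2) by (cases xs) auto
  moreover have "last (z # ys) = y" using p(3) by (cases ys) auto
  ultimately show ?thesis using gp_eq by (metis last_snoc list.sel(1))
qed

lemma edge_on_path:
  assumes "is_path C E p" "{a, b} \<in> E" "a \<in> set p" "b \<in> set p"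
  shows "{a, b} \<in> set (path_edges p)"
proof -
  have ab: "a \<noteq> b" using assms(2) edge_ne by blast
  have key: "{p ! i, p ! j} \<in> set (path_edges p)" if "i < j" "j < length p" "{p ! i, p ! j} \<in> E" for i j
  proof -
    let ?m = "drop i (take (Suc j) p)"
    have m: "is_path C E ?m" "hd ?m = p ! i" "last ?m = p ! j" "length ?m = Suc j - i"
      using sub_path[OF assms(1), of i j] that by auto
    have "p ! i \<in> C" "p ! j \<in> C" using edge_in that(3) by auto
    have "is_path C E [p ! i, p ! j]" using that(3) \<open>p ! i \<in> C\<close> \<open>p ! j \<in> C\<close> by (simp add: ip_Cons2)
    then have "gp (p ! i) (p ! j) = [p ! i, p ! j]" by (intro gp_eq) auto
    moreover have "gp (p ! i) (p ! j) = ?m" using gp_eq m by metis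
    ultimately have "length ?m = 2" by simp
    then have "j = Suc i" using m(4) that by simp
    then show ?thesis using that by (auto simp: pe_set)
  qed
  obtain i where i: "i < length p" "p ! i = a" using assms(3) by (metis in_set_conv_nth)
  obtain j where j: "j < length p" "p ! j = b" using assms(4) by (metis in_set_conv_nth)
  have "i \<noteq> j" using i j ab by auto
  then show ?thesis
  proof (cases "i < j")
    case True then show ?thesis using key i j assms(2) by auto
  next
    case False
    then have "j < i" using \<open>i \<noteq> j\<close> by simp
    then show ?thesis using key[of j i] i j assms(2) by (auto simp: insert_commute)
  qed
qed

lemma gp_concat:
  assumes "x \<in> C" "y \<in> C" "z \<in> C" "set (gp x y) \<inter> set (gp y z) = {y}"
  shows "gp x z = gp x y @ tl (gp y z)"
proof -
  obtain xs where xs: "gp x y = xs @ [y]" using gp_path[OF assms(1,2)] gp_ne[OF assms(1,2)]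
    by (metis append_butlast_last_id)
  obtain ys where ys: "gp y z = y # ys" using gp_path[OF assms(2,3)] gp_ne[OF assms(2,3)]
    by (metis list.collapse)
  have "y \<notin> set xs" using gp_distinct[OF assms(1,2)] xs by simp
  then have dis: "set xs \<inter> set (y # ys) = {}" using assms(4) xs ys by auto
  have "is_path C E (xs @ y # ys)"
    using ip_concat[of C E xs y ys] gp_path[OF assms(1,2)] gp_path[OF assms(2,3)] xs ys dis edge_card
    by auto
  moreover have "hd (xs @ y # ys) = x" using gp_path[OF assms(1,2)] xs by (cases xs) auto
  moreover have "last (xs @ y # ys) = z" using gp_path[OF assms(2,3)] ys by (cases ys) auto
  ultimately show ?thesis using gp_eq xs ys by auto
qed

lemma gp_meet:
  assumes "x \<in> C" "y \<in> C" "z \<in> C" "x \<noteq> y" "y \<noteq> z" "y \<notin> set (gp x z)"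
  shows "\<exists>r w s. gp x y = r @ [w, y] \<and> gp y z = y # w # s"
proof -
  have yin1: "y \<in> set (gp x y)" using gp_path[OF assms(1,2)] gp_ne[OF assms(1,2)]
    by (metis last_in_set)
  have yin2: "y \<in> set (gp y z)" using gp_path[OF assms(2,3)] gp_ne[OF assms(2,3)]
    by (metis hd_in_set)
  have "set (gp x y) \<inter> set (gp y z) \<noteq> {y}"
  proof
    assume "set (gp x y) \<inter> set (gp y z) = {y}"
    then have "gp x z = gp x y @ tl (gp y z)" using gp_concat assms(1,2,3) by blast
    then show False using assms(6) yin1 by simp
  qed
  then obtain w where w: "w \<noteq> y" "w \<in> set (gp x y)" "w \<in> set (gp y z)" using yin1 yin2 by blast
  obtain xs ys where 1: "gp x y = xs @ w # ys" using w(2) by (meson split_list)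
  obtain us vs where 2: "gp y z = us @ w # vs" using w(3) by (meson split_list)
  have w_C: "w \<in> C" using w(2) gp_set[OF assms(1,2)] by blast
  have a: "gp w y = w # ys" using gp_split[OF assms(1,2) 1] by simp
  have b: "gp y w = us @ [w]" using gp_split[OF assms(2,3) 2] by simp
  have "us @ [w] = rev ys @ [w]" using a b gp_rev[OF w_C assms(2)] by simp
  then have ys: "ys = rev us" by simp
  have hdb: "hd (us @ [w]) = y" using b gp_path[OF assms(2) w_C] by simp
  have "us \<noteq> []" using hdb w(1) by auto
  then obtain us' where us: "us = y # us'" using hdb by (cases us) auto
  define L where "L = us' @ [w]"
  have Lne: "L \<noteq> []" unfolding L_def by simp
  have L: "L = hd L # tl L" using Lne by simp
  have 3: "gp y z = y # hd L # (tl L @ vs)"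
  proof -
    have "gp y z = y # (L @ vs)" using 2 us unfolding L_def by simp
    also have "\<dots> = y # hd L # (tl L @ vs)" using L by (metis append_Cons)
    finally show ?thesis .
  qed
  have 4: "gp x y = (xs @ rev (tl L)) @ [hd L, y]"
  proof -
    have "gp x y = xs @ rev L @ [y]" using 1 ys us unfolding L_def by simp
    also have "rev L = rev (tl L) @ [hd L]" using L by (metis rev.simps(2))
    finally show ?thesis by simp
  qed
  show ?thesis using 3 4 by blast
qed

end


lemma card2_eq: "card e = 2 \<Longrightarrow> a \<in> e \<Longrightarrow> b \<in> e \<Longrightarrow> a \<noteq> b \<Longrightarrow> e = {a, b}"
proof -
  assume a: "card e = 2" "a \<in> e" "b \<in> e" "a \<noteq> b"
  have "finite e" using a(1) by (metis card.infinite zero_neq_numeral)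
  moreover have "{a, b} \<subseteq> e" using a by auto
  moreover have "card {a, b} = card e" using a by simp
  ultimately show ?thesis by (metis card_subset_eq)
qed

context tree_ctx
begin

lemma uniq_cell:
  assumes "is_path C E p" "\<epsilon> \<in> E" "\<epsilon> \<notin> set (path_edges p)" "a \<in> set p" "b \<in> set p" "a \<in> \<epsilon>" "b \<in> \<epsilon>"
  shows "a = b"
proof (rule ccontr)
  assume "a \<noteq> b"
  then have e: "\<epsilon> = {a, b}" using card2_eq[OF edge_card[OF assms(2)] assms(6,7)] by blast
  then have "\<epsilon> \<in> set (path_edges p)" using edge_on_path[OF assms(1) _ assms(4,5)] assms(2) by simp
  then show False using assms(3) by simp
qed

lemma inc_prod:
  assumes "is_path C E \<gamma>"
  shows "(\<Prod>\<epsilon>\<in>incident_edges E \<gamma>. q_path q \<epsilon> \<gamma>) = (\<Prod>z\<in>set \<gamma>. Qcell E q \<gamma> z)"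
proof -
  let ?S = "\<lambda>z. {\<epsilon> \<in> E. z \<in> \<epsilon> \<and> \<epsilon> \<notin> set (path_edges \<gamma>)}"
  have inc: "incident_edges E \<gamma> = (\<Union>z\<in>set \<gamma>. ?S z)"
    by (auto simp: incident_edges_def)
  have "(\<Prod>\<epsilon>\<in>incident_edges E \<gamma>. q_path q \<epsilon> \<gamma>) = (\<Prod>z\<in>set \<gamma>. \<Prod>\<epsilon>\<in>?S z. q_path q \<epsilon> \<gamma>)"
    unfolding inc
  proof (rule prod.UNION_disjoint)
    show "\<forall>i\<in>set \<gamma>. finite (?S i)" using fin_E by auto
    show "\<forall>i\<in>set \<gamma>. \<forall>j\<in>set \<gamma>. i \<noteq> j \<longrightarrow> ?S i \<inter> ?S j = {}"
      using uniq_cell[OF assms] by blast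
  qed simp
  also have "\<dots> = (\<Prod>z\<in>set \<gamma>. Qcell E q \<gamma> z)"
  proof (rule prod.cong[OF refl])
    fix z assume z: "z \<in> set \<gamma>"
    have "q_path q \<epsilon> \<gamma> = q \<epsilon> z" if "\<epsilon> \<in> ?S z" for \<epsilon>
    proof -
      have "(THE u. u \<in> set \<gamma> \<and> u \<in> \<epsilon>) = z"
        using uniq_cell[OF assms] that z by (intro the_equality) blast+
      then show ?thesis by (simp add: q_path_def)
    qed
    then show "(\<Prod>\<epsilon>\<in>?S z. q_path q \<epsilon> \<gamma>) = Qcell E q \<gamma> z"
      unfolding Qcell_def by (intro prod.cong) auto
  qed
  finally show ?thesis .
qed

lemma pe_at:
  assumes "distinct p" "p = xs @ u # ys" "e \<in> set (path_edges p)" "u \<in> e"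
  shows "(xs \<noteq> [] \<and> e = {last xs, u}) \<or> (ys \<noteq> [] \<and> e = {u, hd ys})"
proof -
  obtain i where i: "Suc i < length p" "e = {p ! i, p ! Suc i}" using assms(3) by (auto simp: pe_set)
  have pu: "p ! length xs = u" using assms(2) by simp
  have lu: "length xs < length p" using assms(2) by simp
  have "u = p ! i \<or> u = p ! Suc i" using i assms(4) by auto
  then show ?thesis
  proof
    assume "u = p ! i"
    then have "i = length xs" using pu lu i(1) assms(1) nth_eq_iff_index_eq by fastforce
    then have "ys \<noteq> []" "p ! Suc i = hd ys" using i(1) assms(2) by (auto simp: nth_append hd_conv_nth)
    then show ?thesis using i \<open>u = p ! i\<close> by auto
  next
    assume "u = p ! Suc i"
    then have "Suc i = length xs" using pu lu i(1) assms(1) nth_eq_iff_index_eq by fastforce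
    then have xs: "xs \<noteq> []" "i = length xs - 1" by auto
    then have "p ! i = last xs" using assms(2) by (simp add: nth_append last_conv_nth)
    note xs = xs(1) this
    then show ?thesis using i \<open>u = p ! Suc i\<close> by auto
  qed
qed

end

locale arrow_ctx = tree_ctx +
  fixes \<alpha>
  assumes \<alpha>C: "\<alpha> \<in> C" and \<alpha>val: "valency E \<alpha> = 1"
begin

definition pa where "pa u = gp u \<alpha> ! 1"
definition ch where "ch u = {c \<in> C. c \<noteq> \<alpha> \<and> pa c = u}"

lemma gp_pa:
  assumes "u \<in> C" "u \<noteq> \<alpha>"
  shows "gp u \<alpha> = u # gp (pa u) \<alpha> \<and> pa u \<in> C \<and> {u, pa u} \<in> E \<and> u \<notin> set (gp (pa u) \<alpha>)"
proof -
  have p: "is_path C E (gp u \<alpha>)" "hd (gp u \<alpha>) = u" "last (gp u \<alpha>) = \<alpha>"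
    using gp_path[OF assms(1) \<alpha>C] by auto
  obtain r where r: "gp u \<alpha> = u # r" using p(2) gp_ne[OF assms(1) \<alpha>C] by (metis list.collapse)
  have "r \<noteq> []" using r p(3) assms(2) by auto
  then obtain w r' where r': "r = w # r'" by (cases r) auto
  have w: "pa u = w" unfolding pa_def using r r' by simp
  have "gp w \<alpha> = w # r'" using gp_split[OF assms(1) \<alpha>C, of "[u]" w r'] r r' by simp
  moreover have "{u, w} \<in> E" using p(1) r r' by (simp add: ip_Cons2)
  moreover have "u \<notin> set (w # r')" using gp_distinct[OF assms(1) \<alpha>C] r r' by simp
  ultimately show ?thesis using r r' w edge_in by auto
qed

lemma D_ne: "u \<in> C \<Longrightarrow> u \<noteq> \<alpha> \<Longrightarrow> pa u \<noteq> u"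
  using gp_pa[of u] edge_ne[of u "pa u"] by simp

lemma ch_sub: "ch u \<subseteq> C - {\<alpha>}"
  by (auto simp: ch_def)

lemma ch_not_pa: "u \<in> C \<Longrightarrow> u \<noteq> \<alpha> \<Longrightarrow> c \<in> ch u \<Longrightarrow> c \<noteq> pa u"
proof
  assume a: "u \<in> C" "u \<noteq> \<alpha>" "c \<in> ch u" "c = pa u"
  have c: "c \<in> C" "c \<noteq> \<alpha>" "pa c = u" using a(3) by (auto simp: ch_def)
  have "gp c \<alpha> = c # gp u \<alpha>" using gp_pa[OF c(1,2)] c(3) by simp
  then have "u \<in> set (gp c \<alpha>)" using gp_pa[OF a(1,2)] by simp
  then show False using gp_pa[OF a(1,2)] a(4) by simp
qed

lemma ch_ne: "c \<in> ch u \<Longrightarrow> c \<noteq> u"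
  using D_ne[of c] by (auto simp: ch_def)

lemma ch_edge: "c \<in> ch u \<Longrightarrow> {u, c} \<in> E"
proof -
  assume "c \<in> ch u"
  then have c: "c \<in> C" "c \<noteq> \<alpha>" "pa c = u" by (auto simp: ch_def)
  show ?thesis using gp_pa[OF c(1,2)] c(3) by (simp add: insert_commute)
qed

lemma ch_gp: "c \<in> ch u \<Longrightarrow> gp c \<alpha> = c # gp u \<alpha>"
proof -
  assume "c \<in> ch u"
  then have c: "c \<in> C" "c \<noteq> \<alpha>" "pa c = u" by (auto simp: ch_def)
  show ?thesis using gp_pa[OF c(1,2)] c(3) by simp
qed

lemma edges_at:
  assumes "u \<in> C" "u \<noteq> \<alpha>"
  shows "{e \<in> E. u \<in> e} = insert {u, pa u} ((\<lambda>c. {u, c}) ` ch u)"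
proof
  show "insert {u, pa u} ((\<lambda>c. {u, c}) ` ch u) \<subseteq> {e \<in> E. u \<in> e}"
    using gp_pa[OF assms] ch_edge[of _ u] by auto
next
  show "{e \<in> E. u \<in> e} \<subseteq> insert {u, pa u} ((\<lambda>c. {u, c}) ` ch u)"
  proof
    fix e assume e: "e \<in> {e \<in> E. u \<in> e}"
    obtain a b where ab: "a \<noteq> b" "e = {a, b}" using e edge_ex by blast
    obtain w where w: "e = {u, w}" "w \<noteq> u" using ab e by auto
    have wE: "{u, w} \<in> E" using e w by simp
    show "e \<in> insert {u, pa u} ((\<lambda>c. {u, c}) ` ch u)"
    proof (cases "w = pa u")
      case True then show ?thesis using w by simp
    next
      case False
      have wC: "w \<in> C" using edge_in wE by blast
      have wa: "w \<noteq> \<alpha>"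
      proof
        assume "w = \<alpha>"
        then have "gp u \<alpha> = [u, \<alpha>]" using gp_edge wE by simp
        then have "pa u = \<alpha>" by (simp add: pa_def)
        then show False using False \<open>w = \<alpha>\<close> by simp
      qed
      have wn: "w \<notin> set (gp u \<alpha>)"
      proof
        assume "w \<in> set (gp u \<alpha>)"
        moreover have "u \<in> set (gp u \<alpha>)" using gp_pa[OF assms] by simp
        ultimately have "{u, w} \<in> set (path_edges (gp u \<alpha>))"
          using edge_on_path gp_path[OF assms(1) \<alpha>C] wE by blast
        then have "{u, w} \<in> set (path_edges (u # gp (pa u) \<alpha>))" using gp_pa[OF assms] by simp
        moreover obtain r where "gp (pa u) \<alpha> = pa u # r"
          using gp_pa[OF assms] gp_path[OF _ \<alpha>C] gp_ne[OF _ \<alpha>C] by (metis list.collapse)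
        ultimately have "{u, w} = {u, pa u} \<or> {u, w} \<in> set (path_edges (gp (pa u) \<alpha>))" by simp
        then show False
        proof
          assume "{u, w} = {u, pa u}" then show False using False w(2) by (auto simp: doubleton_eq_iff)
        next
          assume "{u, w} \<in> set (path_edges (gp (pa u) \<alpha>))"
          then have "u \<in> set (gp (pa u) \<alpha>)" using pe_sub_set by blast
          then show False using gp_pa[OF assms] by simp
        qed
      qed
      have "is_path C E (w # gp u \<alpha>)"
      proof -
        have g: "gp u \<alpha> = u # gp (pa u) \<alpha>" using gp_pa[OF assms] by simp
        have n: "{w, u} \<notin> set (path_edges (gp u \<alpha>))" using wn pe_sub_set by blast
        have wE': "{w, u} \<in> E" using wE by (simp add: insert_commute)
        have ip: "is_path C E (gp u \<alpha>)" using gp_path[OF assms(1) \<alpha>C] by simp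
        show ?thesis using ip n wE' wC unfolding g ip_Cons2 by blast
      qed
      then have "gp w \<alpha> = w # gp u \<alpha>" using gp_path[OF assms(1) \<alpha>C] gp_ne[OF assms(1) \<alpha>C]
        by (intro gp_eq) (auto simp: last_ConsR)
      then have "pa w = u" unfolding pa_def using gp_pa[OF assms] by simp
      then have "w \<in> ch u" using wC wa by (simp add: ch_def)
      then show ?thesis using w by simp
    qed
  qed
qed

lemma fin_ch: "finite (ch u)"
  using fin_C by (auto simp: ch_def)

lemma inj_ch: "inj_on (\<lambda>c. {u, c}) (ch u)"
proof (rule inj_onI)
  fix c c' assume a: "c \<in> ch u" "c' \<in> ch u" "{u, c} = {u, c'}"
  have "c \<in> {u, c'}" using a(3) by blast
  then show "c = c'" using ch_ne[OF a(1)] by blast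
qed

lemma pa_notin: "u \<in> C \<Longrightarrow> u \<noteq> \<alpha> \<Longrightarrow> {u, pa u} \<notin> (\<lambda>c. {u, c}) ` ch u"
proof
  assume a: "u \<in> C" "u \<noteq> \<alpha>" "{u, pa u} \<in> (\<lambda>c. {u, c}) ` ch u"
  then obtain c where c: "c \<in> ch u" "{u, pa u} = {u, c}" by blast
  have "pa u \<in> {u, c}" using c(2) by blast
  then have "pa u = c" using D_ne[OF a(1,2)] by blast
  then show False using ch_not_pa[OF a(1,2) c(1)] by simp
qed

lemma valency_ch: "u \<in> C \<Longrightarrow> u \<noteq> \<alpha> \<Longrightarrow> valency E u = Suc (card (ch u))"
proof -
  assume a: "u \<in> C" "u \<noteq> \<alpha>"
  have "valency E u = card (insert {u, pa u} ((\<lambda>c. {u, c}) ` ch u))"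
    unfolding valency_def edges_at[OF a] ..
  also have "\<dots> = Suc (card ((\<lambda>c. {u, c}) ` ch u))"
    using pa_notin[OF a] fin_ch by simp
  also have "\<dots> = Suc (card (ch u))" using inj_ch by (simp add: card_image)
  finally show ?thesis .
qed

end


lemma L0:
  fixes g :: "'b \<Rightarrow> int"
  assumes "finite K" "\<forall>c\<in>K. \<forall>c'\<in>K. g c \<noteq> 1 \<longrightarrow> g c' \<noteq> 1 \<longrightarrow> c = c'"
  shows "(\<Sum>c\<in>K. prod g (K - {c})) - (int (card K) - 1) * prod g K = 1"
proof (cases "\<exists>d\<in>K. g d \<noteq> 1")
  case False
  then have "\<And>S. S \<subseteq> K \<Longrightarrow> prod g S = 1" by (metis prod.neutral subsetD)
  then have "(\<Sum>c\<in>K. prod g (K - {c})) = (\<Sum>c\<in>K. 1)" by (intro sum.cong) auto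
  moreover have "prod g K = 1" using False by simp
  ultimately show ?thesis by simp
next
  case True
  then obtain d where d: "d \<in> K" "g d \<noteq> 1" by blast
  define K0 where "K0 = K - {d}"
  have one: "\<And>c. c \<in> K0 \<Longrightarrow> g c = 1" using assms(2) d unfolding K0_def by blast
  have K0f: "finite K0" using assms(1) unfolding K0_def by simp
  have P0: "\<And>S. S \<subseteq> K0 \<Longrightarrow> prod g S = 1" using one by (metis prod.neutral subsetD)
  have pK: "prod g K = g d" using prod.remove[OF assms(1) d(1), of g] P0[of K0] unfolding K0_def by simp
  have s1: "(\<Sum>c\<in>K. prod g (K - {c})) = prod g (K - {d}) + (\<Sum>c\<in>K0. prod g (K - {c}))"
    using sum.remove[OF assms(1) d(1)] unfolding K0_def by simp
  have s2: "prod g (K - {c}) = g d" if "c \<in> K0" for c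
  proof -
    have "d \<in> K - {c}" using that d unfolding K0_def by auto
    then have "prod g (K - {c}) = g d * prod g (K - {c} - {d})"
      using prod.remove[of "K - {c}" d g] assms(1) by simp
    moreover have "K - {c} - {d} \<subseteq> K0" unfolding K0_def by auto
    ultimately show ?thesis using P0 by simp
  qed
  have "(\<Sum>c\<in>K0. prod g (K - {c})) = (\<Sum>c\<in>K0. g d)" using s2 by (intro sum.cong) auto
  then have s3: "(\<Sum>c\<in>K. prod g (K - {c})) = 1 + int (card K0) * g d"
    using s1 P0[of K0] unfolding K0_def by simp
  have "card K = Suc (card K0)" using card_Suc_Diff1[OF assms(1) d(1)] unfolding K0_def by simp
  then show ?thesis using s3 pK by (simp add: algebra_simps)
qed

lemma L1:
  fixes g :: "'b \<Rightarrow> int"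
  assumes "finite K" "d \<in> K" "\<forall>c\<in>K - {d}. \<forall>c'\<in>K - {d}. g c \<noteq> 1 \<longrightarrow> g c' \<noteq> 1 \<longrightarrow> c = c'"
  shows "(\<Sum>c\<in>K. prod g (K - {c})) - (int (card K) - 1) * prod g K
     = prod g (K - {d}) + g d * (1 - prod g (K - {d}))"
proof -
  define K0 where "K0 = K - {d}"
  have K0f: "finite K0" using assms(1) unfolding K0_def by simp
  have l0: "(\<Sum>c\<in>K0. prod g (K0 - {c})) - (int (card K0) - 1) * prod g K0 = 1"
    using L0[OF K0f] assms(3) unfolding K0_def by blast
  have pK: "prod g K = g d * prod g K0" using prod.remove[OF assms(1,2), of g] unfolding K0_def by simp
  have s1: "(\<Sum>c\<in>K. prod g (K - {c})) = prod g K0 + (\<Sum>c\<in>K0. prod g (K - {c}))"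
    using sum.remove[OF assms(1,2)] unfolding K0_def by simp
  have s2: "prod g (K - {c}) = g d * prod g (K0 - {c})" if "c \<in> K0" for c
  proof -
    have "d \<in> K - {c}" using that assms(2) unfolding K0_def by auto
    then have "prod g (K - {c}) = g d * prod g (K - {c} - {d})"
      using prod.remove[of "K - {c}" d g] assms(1) by simp
    moreover have "K - {c} - {d} = K0 - {c}" unfolding K0_def by auto
    ultimately show ?thesis by simp
  qed
  have "(\<Sum>c\<in>K0. prod g (K - {c})) = g d * (\<Sum>c\<in>K0. prod g (K0 - {c}))"
    using s2 by (simp add: sum_distrib_left)
  then have s3: "(\<Sum>c\<in>K. prod g (K - {c})) = prod g K0 + g d * (\<Sum>c\<in>K0. prod g (K0 - {c}))"
    using s1 by simp
  have cK: "card K = Suc (card K0)" using card_Suc_Diff1[OF assms(1,2)] unfolding K0_def by simp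
  have S0: "(\<Sum>c\<in>K0. prod g (K0 - {c})) = 1 + (int (card K0) - 1) * prod g K0" using l0 by simp
  show ?thesis unfolding K0_def[symmetric] s3 pK cK S0 by (simp add: algebra_simps)
qed

definition mval :: "'a set \<Rightarrow> 'a set set \<Rightarrow> ('a set \<Rightarrow> 'a \<Rightarrow> int) \<Rightarrow> 'a \<Rightarrow> int" where
  "mval C E q \<alpha> = - (\<Sum>v\<in>C - {\<alpha>}. (\<Prod>\<epsilon>\<in>incident_edges E (gpath C E v \<alpha>). q_path q \<epsilon> (gpath C E v \<alpha>))
      * (int (valency E v) - 2))"

lemma pe_Cons_hd: "p \<noteq> [] \<Longrightarrow> path_edges (x # p) = {x, hd p} # path_edges p"
  by (cases p) auto

context arrow_ctx
begin

definition Yv where "Yv q u = (\<Prod>z\<in>set (gp u \<alpha>) - {u}. Qcell E q (gp u \<alpha>) z)"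

lemma pe_gp:
  assumes "u \<in> C" "u \<noteq> \<alpha>"
  shows "path_edges (gp u \<alpha>) = {u, pa u} # path_edges (gp (pa u) \<alpha>)"
proof -
  have g: "gp u \<alpha> = u # gp (pa u) \<alpha>" using gp_pa[OF assms] by simp
  have "pa u \<in> C" using gp_pa[OF assms] by simp
  then have "gp (pa u) \<alpha> \<noteq> []" "hd (gp (pa u) \<alpha>) = pa u" using gp_ne gp_path \<alpha>C by auto
  then show ?thesis unfolding g by (simp add: pe_Cons_hd)
qed

lemma not_in_tail: "u \<in> C \<Longrightarrow> u \<noteq> \<alpha> \<Longrightarrow> e \<in> set (path_edges (gp (pa u) \<alpha>)) \<Longrightarrow> u \<notin> e"
  using gp_pa pe_sub_set by blast

lemma Qcell_self:
  assumes "u \<in> C" "u \<noteq> \<alpha>"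
  shows "Qcell E q (gp u \<alpha>) u = (\<Prod>c\<in>ch u. q {u, c} u)"
proof -
  have "{\<epsilon> \<in> E. u \<in> \<epsilon> \<and> \<epsilon> \<notin> set (path_edges (gp u \<alpha>))} = (\<lambda>c. {u, c}) ` ch u"
  proof -
    have "{\<epsilon> \<in> E. u \<in> \<epsilon> \<and> \<epsilon> \<notin> set (path_edges (gp u \<alpha>))}
        = {\<epsilon> \<in> {e \<in> E. u \<in> e}. \<epsilon> \<noteq> {u, pa u} \<and> \<epsilon> \<notin> set (path_edges (gp (pa u) \<alpha>))}"
      unfolding pe_gp[OF assms] by auto
    also have "\<dots> = {\<epsilon> \<in> insert {u, pa u} ((\<lambda>c. {u, c}) ` ch u). \<epsilon> \<noteq> {u, pa u}}"
      unfolding edges_at[OF assms] using not_in_tail[OF assms] by blast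
    also have "\<dots> = (\<lambda>c. {u, c}) ` ch u" using pa_notin[OF assms] by blast
    finally show ?thesis .
  qed
  then show ?thesis unfolding Qcell_def using prod.reindex[OF inj_ch, of "\<lambda>e. q e u" u] by simp
qed

lemma Qcell_ch:
  assumes "u \<in> C" "u \<noteq> \<alpha>" "c \<in> ch u"
  shows "Qcell E q (gp c \<alpha>) u = (\<Prod>c'\<in>ch u - {c}. q {u, c'} u)"
proof -
  have pc: "path_edges (gp c \<alpha>) = {c, u} # {u, pa u} # path_edges (gp (pa u) \<alpha>)"
    using ch_gp[OF assms(3)] pe_gp[OF assms(1,2)] gp_pa[OF assms(1,2)] by simp
  have "{\<epsilon> \<in> E. u \<in> \<epsilon> \<and> \<epsilon> \<notin> set (path_edges (gp c \<alpha>))} = (\<lambda>c'. {u, c'}) ` (ch u - {c})"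
  proof -
    have "{\<epsilon> \<in> E. u \<in> \<epsilon> \<and> \<epsilon> \<notin> set (path_edges (gp c \<alpha>))}
        = {\<epsilon> \<in> {e \<in> E. u \<in> e}. \<epsilon> \<noteq> {u, c} \<and> \<epsilon> \<noteq> {u, pa u} \<and> \<epsilon> \<notin> set (path_edges (gp (pa u) \<alpha>))}"
      unfolding pc by (auto simp: insert_commute)
    also have "\<dots> = {\<epsilon> \<in> insert {u, pa u} ((\<lambda>c. {u, c}) ` ch u). \<epsilon> \<noteq> {u, c} \<and> \<epsilon> \<noteq> {u, pa u}}"
      unfolding edges_at[OF assms(1,2)] using not_in_tail[OF assms(1,2)] by blast
    also have "\<dots> = (\<lambda>c'. {u, c'}) ` (ch u - {c})"
      using pa_notin[OF assms(1,2)] inj_ch[of u] assms(3) by (auto simp: inj_on_def)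
    finally show ?thesis .
  qed
  moreover have "inj_on (\<lambda>c'. {u, c'}) (ch u - {c})" using inj_ch by (rule inj_on_subset) auto
  ultimately show ?thesis unfolding Qcell_def using prod.reindex[of "\<lambda>c'. {u, c'}" "ch u - {c}" "\<lambda>e. q e u"]
    by simp
qed

lemma Qcell_other:
  assumes "u \<in> C" "u \<noteq> \<alpha>" "c \<in> ch u" "z \<in> set (gp u \<alpha>)" "z \<noteq> u"
  shows "Qcell E q (gp c \<alpha>) z = Qcell E q (gp u \<alpha>) z"
proof -
  have cC: "c \<in> C" "c \<noteq> \<alpha>" "pa c = u" using assms(3) by (auto simp: ch_def)
  have "c \<notin> set (gp u \<alpha>)" using gp_pa[OF cC(1,2)] cC(3) by simp
  then have zc: "z \<noteq> c" using assms(4) by auto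
  have "path_edges (gp c \<alpha>) = {c, u} # path_edges (gp u \<alpha>)"
    using pe_gp[OF cC(1,2)] cC(3) by simp
  then have "{\<epsilon> \<in> E. z \<in> \<epsilon> \<and> \<epsilon> \<notin> set (path_edges (gp c \<alpha>))} = {\<epsilon> \<in> E. z \<in> \<epsilon> \<and> \<epsilon> \<notin> set (path_edges (gp u \<alpha>))}"
    using zc assms(5) by auto
  then show ?thesis unfolding Qcell_def by simp
qed

lemma x_eq:
  assumes "u \<in> C" "u \<noteq> \<alpha>"
  shows "(\<Prod>z\<in>set (gp u \<alpha>). Qcell E q (gp u \<alpha>) z) = (\<Prod>c\<in>ch u. q {u, c} u) * Yv q u"
proof -
  have "u \<in> set (gp u \<alpha>)" using gp_pa[OF assms] by simp
  then have "(\<Prod>z\<in>set (gp u \<alpha>). Qcell E q (gp u \<alpha>) z) = Qcell E q (gp u \<alpha>) u * Yv q u"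
    unfolding Yv_def using prod.remove[of "set (gp u \<alpha>)" u "Qcell E q (gp u \<alpha>)"] by simp
  then show ?thesis using Qcell_self[OF assms, of q] by simp
qed

lemma Y_ch:
  assumes "u \<in> C" "u \<noteq> \<alpha>" "c \<in> ch u"
  shows "Yv q c = (\<Prod>c'\<in>ch u - {c}. q {u, c'} u) * Yv q u"
proof -
  have cC: "c \<in> C" "c \<noteq> \<alpha>" "pa c = u" using assms(3) by (auto simp: ch_def)
  have g: "gp c \<alpha> = c # gp u \<alpha>" using ch_gp[OF assms(3)] .
  have "c \<notin> set (gp u \<alpha>)" using gp_pa[OF cC(1,2)] cC(3) by simp
  then have s: "set (gp c \<alpha>) - {c} = set (gp u \<alpha>)" unfolding g by auto
  have uin: "u \<in> set (gp u \<alpha>)" using gp_pa[OF assms(1,2)] by simp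
  have "Yv q c = (\<Prod>z\<in>set (gp u \<alpha>). Qcell E q (gp c \<alpha>) z)" unfolding Yv_def s ..
  also have "\<dots> = Qcell E q (gp c \<alpha>) u * (\<Prod>z\<in>set (gp u \<alpha>) - {u}. Qcell E q (gp c \<alpha>) z)"
    using prod.remove[OF _ uin] by simp
  also have "(\<Prod>z\<in>set (gp u \<alpha>) - {u}. Qcell E q (gp c \<alpha>) z) = Yv q u"
    unfolding Yv_def using Qcell_other[OF assms] by (intro prod.cong) auto
  finally show ?thesis using Qcell_ch[OF assms] by simp
qed

lemma top_set:
  obtains w where "{c \<in> C - {\<alpha>}. pa c = \<alpha>} = {w}" "w \<in> C" "w \<noteq> \<alpha>" "pa w = \<alpha>"
proof -
  have "card {e \<in> E. \<alpha> \<in> e} = 1" using \<alpha>val by (simp add: valency_def)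
  then obtain e0 where e0: "{e \<in> E. \<alpha> \<in> e} = {e0}" by (meson card_1_singletonE)
  then have e0E: "e0 \<in> E" "\<alpha> \<in> e0" by auto
  then obtain w where w: "e0 = {\<alpha>, w}" "w \<noteq> \<alpha>" using edge_ex by blast
  have wE: "{w, \<alpha>} \<in> E" using w e0E by (simp add: insert_commute)
  have wC: "w \<in> C" using edge_in wE by blast
  have "gp w \<alpha> = [w, \<alpha>]" using gp_edge[OF wE] .
  then have pw: "pa w = \<alpha>" by (simp add: pa_def)
  have "{c \<in> C - {\<alpha>}. pa c = \<alpha>} = {w}"
  proof
    show "{w} \<subseteq> {c \<in> C - {\<alpha>}. pa c = \<alpha>}" using wC w pw by auto
    show "{c \<in> C - {\<alpha>}. pa c = \<alpha>} \<subseteq> {w}"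
    proof
      fix c assume c: "c \<in> {c \<in> C - {\<alpha>}. pa c = \<alpha>}"
      then have "{c, \<alpha>} \<in> E" using gp_pa[of c] by auto
      then have "{c, \<alpha>} \<in> {e \<in> E. \<alpha> \<in> e}" by simp
      then have "{c, \<alpha>} = {\<alpha>, w}" unfolding e0 w(1) by simp
      then show "c \<in> {w}" using c by (auto simp: doubleton_eq_iff)
    qed
  qed
  then show ?thesis using that wC w pw by blast
qed

lemma Y_top: "u \<in> C \<Longrightarrow> u \<noteq> \<alpha> \<Longrightarrow> pa u = \<alpha> \<Longrightarrow> Yv q u = 1"
proof -
  assume a: "u \<in> C" "u \<noteq> \<alpha>" "pa u = \<alpha>"
  have g: "gp u \<alpha> = [u, \<alpha>]" using gp_pa[OF a(1,2)] a(3) gp_self[OF \<alpha>C] by simp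
  have uE: "{u, \<alpha>} \<in> E" using gp_pa[OF a(1,2)] a(3) by simp
  have "card {e \<in> E. \<alpha> \<in> e} = 1" using \<alpha>val by (simp add: valency_def)
  then obtain e0 where e0: "{e \<in> E. \<alpha> \<in> e} = {e0}" by (meson card_1_singletonE)
  have "{u, \<alpha>} \<in> {e \<in> E. \<alpha> \<in> e}" using uE by simp
  then have "{u, \<alpha>} = e0" unfolding e0 by simp
  then have "{\<epsilon> \<in> E. \<alpha> \<in> \<epsilon> \<and> \<epsilon> \<notin> set (path_edges [u, \<alpha>])} = {}"
    using e0 by (auto simp del: insert_iff)
  then have "Qcell E q [u, \<alpha>] \<alpha> = 1" unfolding Qcell_def by (metis prod.empty)
  moreover have "set [u, \<alpha>] - {u} = {\<alpha>}" using a(2) by auto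
  ultimately show ?thesis unfolding Yv_def g by simp
qed

definition kap where
  "kap q u = (\<Sum>c\<in>ch u. \<Prod>c'\<in>ch u - {c}. q {u, c'} u) - (int (card (ch u)) - 1) * (\<Prod>c\<in>ch u. q {u, c} u)"

lemma m_kappa: "mval C E q \<alpha> = 1 + (\<Sum>u\<in>C - {\<alpha>}. Yv q u * (kap q u - 1))"
proof -
  let ?D = "C - {\<alpha>}"
  let ?T = "{c \<in> C - {\<alpha>}. pa c = \<alpha>}"
  have Df: "finite ?D" using fin_C by simp
  have m1: "mval C E q \<alpha> = (\<Sum>u\<in>?D. - ((\<Prod>c\<in>ch u. q {u, c} u) * Yv q u) * (int (card (ch u)) - 1))"
    unfolding mval_def sum_negf[symmetric]
  proof (intro sum.cong refl)
    fix u assume u: "u \<in> C - {\<alpha>}"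
    then have uu: "u \<in> C" "u \<noteq> \<alpha>" by auto
    show "- ((\<Prod>\<epsilon>\<in>incident_edges E (gp u \<alpha>). q_path q \<epsilon> (gp u \<alpha>)) * (int (valency E u) - 2)) =
      - ((\<Prod>c\<in>ch u. q {u, c} u) * Yv q u) * (int (card (ch u)) - 1)"
      using inc_prod[of "gp u \<alpha>" q] gp_path[OF uu(1) \<alpha>C] x_eq[OF uu, of q] valency_ch[OF uu] by simp
  qed
  have k: "Yv q u * kap q u = (\<Sum>c\<in>ch u. Yv q c) - ((\<Prod>c\<in>ch u. q {u, c} u) * Yv q u) * (int (card (ch u)) - 1)"
    if u: "u \<in> ?D" for u
  proof -
    have uu: "u \<in> C" "u \<noteq> \<alpha>" using u by auto
    have "Yv q u * kap q u = (\<Sum>c\<in>ch u. Yv q u * (\<Prod>c'\<in>ch u - {c}. q {u, c'} u))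
         - ((\<Prod>c\<in>ch u. q {u, c} u) * Yv q u) * (int (card (ch u)) - 1)"
      unfolding kap_def by (simp add: algebra_simps sum_distrib_left)
    also have "(\<Sum>c\<in>ch u. Yv q u * (\<Prod>c'\<in>ch u - {c}. q {u, c'} u)) = (\<Sum>c\<in>ch u. Yv q c)"
      using Y_ch[OF uu] by (intro sum.cong) (auto simp: mult.commute)
    finally show ?thesis .
  qed
  have s2: "(\<Sum>u\<in>?D. Yv q u * kap q u) = (\<Sum>u\<in>?D. \<Sum>c\<in>ch u. Yv q c) + mval C E q \<alpha>"
    unfolding m1 using k by (simp add: sum.distrib sum_subtractf sum_negf)
  have un: "(\<Union>u\<in>?D. ch u) = ?D - ?T"
  proof
    show "(\<Union>u\<in>?D. ch u) \<subseteq> ?D - ?T" by (auto simp: ch_def)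
    show "?D - ?T \<subseteq> (\<Union>u\<in>?D. ch u)"
    proof
      fix c assume c: "c \<in> ?D - ?T"
      then have "pa c \<in> C" "pa c \<noteq> \<alpha>" using gp_pa[of c] by auto
      moreover have "c \<in> ch (pa c)" using c by (auto simp: ch_def)
      ultimately show "c \<in> (\<Union>u\<in>?D. ch u)" by blast
    qed
  qed
  have s3: "(\<Sum>u\<in>?D. \<Sum>c\<in>ch u. Yv q c) = (\<Sum>c\<in>?D - ?T. Yv q c)"
    unfolding un[symmetric]
    by (rule sum.UNION_disjoint[symmetric]) (use Df fin_ch in \<open>auto simp: ch_def\<close>)
  obtain w where w: "?T = {w}" "w \<in> C" "w \<noteq> \<alpha>" "pa w = \<alpha>" by (rule top_set)
  have s4: "(\<Sum>c\<in>?D. Yv q c) = (\<Sum>c\<in>?D - ?T. Yv q c) + 1"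
  proof -
    have "(\<Sum>c\<in>?D. Yv q c) = (\<Sum>c\<in>?D - ?T. Yv q c) + (\<Sum>c\<in>?T. Yv q c)"
      using sum.subset_diff[of ?T ?D] Df by auto
    also have "(\<Sum>c\<in>?T. Yv q c) = 1" using w Y_top by simp
    finally show ?thesis .
  qed
  have "(\<Sum>u\<in>?D. Yv q u * (kap q u - 1)) = (\<Sum>u\<in>?D. Yv q u * kap q u) - (\<Sum>u\<in>?D. Yv q u)"
    by (simp add: algebra_simps sum_subtractf)
  then show ?thesis using s2 s3 s4 by simp
qed

end


context arrow_ctx
begin

lemma atmost:
  assumes pr: "\<forall>v\<in>V - {v0}. card {e \<in> E. v \<in> e \<and> e \<notin> set (path_edges (gp v0 v)) \<and> q e v \<noteq> 1} \<le> 1"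
    and u: "u \<in> V - {v0}" and K: "K \<subseteq> ch u" and nK: "\<forall>c\<in>K. {u, c} \<notin> set (path_edges (gp v0 u))"
  shows "\<forall>c\<in>K. \<forall>c'\<in>K. q {u, c} u \<noteq> 1 \<longrightarrow> q {u, c'} u \<noteq> 1 \<longrightarrow> c = c'"
proof (intro ballI impI)
  fix c c' assume c: "c \<in> K" "c' \<in> K" "q {u, c} u \<noteq> 1" "q {u, c'} u \<noteq> 1"
  let ?PS = "{e \<in> E. u \<in> e \<and> e \<notin> set (path_edges (gp v0 u)) \<and> q e u \<noteq> 1}"
  have f: "finite ?PS" using fin_E by simp
  have cd: "card ?PS \<le> Suc 0" using pr u by simp
  have all: "\<forall>a\<in>?PS. \<forall>b\<in>?PS. a = b" using card_le_Suc0_iff_eq[OF f] cd by simp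
  have m1: "{u, c} \<in> ?PS" using c(1,3) K nK ch_edge[of c u] by auto
  have m2: "{u, c'} \<in> ?PS" using c(2,4) K nK ch_edge[of c' u] by auto
  have "{u, c} = {u, c'}" using bspec[OF bspec[OF all m1] m2] .
  then show "c = c'" using inj_ch[of u] c(1,2) K unfolding inj_on_def by blast
qed

lemma kap_L0:
  assumes "\<forall>c\<in>ch u. \<forall>c'\<in>ch u. q {u, c} u \<noteq> 1 \<longrightarrow> q {u, c'} u \<noteq> 1 \<longrightarrow> c = c'"
  shows "kap q u = 1"
  unfolding kap_def using L0[OF fin_ch assms] by simp

lemma G:
  assumes CVA: "C = V \<union> A" and VA: "V \<inter> A = {}" and \<alpha>A: "\<alpha> \<in> A"
    and Aval: "\<forall>a\<in>A. valency E a = 1" and pr0: "pseudo_root V A E q v0"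
  shows "mval C E q \<alpha> = 1 + (\<Sum>u\<in>set (gp v0 \<alpha>) - {v0, \<alpha>}. Yv q u
     * ((\<Prod>e\<in>{e \<in> E. u \<in> e \<and> e \<notin> set (path_edges (gp v0 \<alpha>))}. q e u) - 1)
     * (1 - (\<Prod>e\<in>{e \<in> E. u \<in> e \<and> e \<in> set (path_edges (gp v0 u))}. q e u)))"
proof -
  have v0V: "v0 \<in> V" and q0: "\<forall>e\<in>E. v0 \<in> e \<longrightarrow> q e v0 = 1"
    and pr: "\<forall>v\<in>V - {v0}. card {e \<in> E. v \<in> e \<and> e \<notin> set (path_edges (gp v0 v)) \<and> q e v \<noteq> 1} \<le> 1"
    using pr0 unfolding pseudo_root_def CVA[symmetric] by auto
  have v0C: "v0 \<in> C" using v0V CVA by simp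
  have v0a: "v0 \<noteq> \<alpha>" using v0V \<alpha>A VA by auto
  let ?S = "set (gp v0 \<alpha>) - {v0, \<alpha>}"
  have noch: "ch u = {}" if "u \<in> A" "u \<noteq> \<alpha>" for u
  proof -
    have "u \<in> C" using that CVA by simp
    then have "valency E u = Suc (card (ch u))" using valency_ch that by simp
    moreover have "valency E u = 1" using Aval that by simp
    ultimately have "Suc (card (ch u)) = 1" by simp
    then show ?thesis using fin_ch by simp
  qed
  have k1: "kap q u = 1" if u: "u \<in> C - {\<alpha>}" "u \<notin> ?S" for u
  proof (rule kap_L0)
    have uu: "u \<in> C" "u \<noteq> \<alpha>" using u by auto
    consider "u = v0" | "u \<in> A" | "u \<in> V - {v0}" "u \<notin> set (gp v0 \<alpha>)"
      using u CVA by auto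
    then show "\<forall>c\<in>ch u. \<forall>c'\<in>ch u. q {u, c} u \<noteq> 1 \<longrightarrow> q {u, c'} u \<noteq> 1 \<longrightarrow> c = c'"
    proof cases
      case 1
      then show ?thesis using q0 ch_edge by auto
    next
      case 2
      then show ?thesis using noch uu by simp
    next
      case 3
      have nK: "\<forall>c\<in>ch u. {u, c} \<notin> set (path_edges (gp v0 u))"
      proof
        fix c assume c: "c \<in> ch u"
        obtain r w s where rws: "gp v0 u = r @ [w, u]" "gp u \<alpha> = u # w # s"
          using gp_meet[OF v0C uu(1) \<alpha>C] 3 uu by force
        have wp: "w = pa u" unfolding pa_def using rws(2) by simp
        show "{u, c} \<notin> set (path_edges (gp v0 u))"
        proof
          assume a: "{u, c} \<in> set (path_edges (gp v0 u))"
          have "distinct (gp v0 u)" using gp_distinct[OF v0C uu(1)] .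
          then have "{u, c} = {last (r @ [w]), u}"
            using pe_at[of "gp v0 u" "r @ [w]" u "[]" "{u, c}"] rws(1) a by simp
          then have "c = w" using ch_ne[OF c] by (auto simp: doubleton_eq_iff)
          then show False using ch_not_pa[OF uu c] wp by simp
        qed
      qed
      show ?thesis using atmost[OF pr 3(1) _ nK] by simp
    qed
  qed
  have k2: "Yv q u * (kap q u - 1) = Yv q u
     * ((\<Prod>e\<in>{e \<in> E. u \<in> e \<and> e \<notin> set (path_edges (gp v0 \<alpha>))}. q e u) - 1)
     * (1 - (\<Prod>e\<in>{e \<in> E. u \<in> e \<and> e \<in> set (path_edges (gp v0 u))}. q e u))"
    if u: "u \<in> ?S" for u
  proof -
    have uS: "u \<in> set (gp v0 \<alpha>)" "u \<noteq> v0" "u \<noteq> \<alpha>" using u by auto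
    have uC: "u \<in> C" using uS(1) gp_set[OF v0C \<alpha>C] by blast
    obtain P R where PR: "gp v0 \<alpha> = P @ u # R" using uS(1) by (meson split_list)
    have dist: "distinct (gp v0 \<alpha>)" using gp_distinct[OF v0C \<alpha>C] .
    have g1: "gp v0 u = P @ [u]" and g2: "gp u \<alpha> = u # R" using gp_split[OF v0C \<alpha>C PR] by auto
    have "P \<noteq> []" using g1 gp_path[OF v0C uC] uS(2) by auto
    then obtain P' d where Pd: "P = P' @ [d]" by (metis append_butlast_last_id)
    have PR': "gp v0 \<alpha> = P' @ d # (u # R)" using PR Pd by simp
    have dC: "d \<in> C" using PR' gp_set[OF v0C \<alpha>C] by auto
    have gd: "gp d \<alpha> = d # u # R" using gp_split[OF v0C \<alpha>C PR'] by simp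
    have "last (gp v0 \<alpha>) = \<alpha>" using gp_path[OF v0C \<alpha>C] by simp
    then have "\<alpha> \<in> set (u # R)" unfolding PR by (metis last_appendR last_in_set list.distinct(1))
    then have da: "d \<noteq> \<alpha>" using dist PR' by auto
    have pd: "pa d = u" unfolding pa_def using gd by simp
    have dch: "d \<in> ch u" using dC da pd by (simp add: ch_def)
    have uV: "u \<in> V - {v0}" using noch[of u] dch uS uC CVA by auto
    have Rne: "R \<noteq> []" using g2 gp_path[OF uC \<alpha>C] uS(3) by auto
    have pu: "pa u = hd R" unfolding pa_def using g2 Rne by (cases R) auto
    have distu: "distinct (gp v0 u)" using gp_distinct[OF v0C uC] .
    have nK: "\<forall>c\<in>ch u - {d}. {u, c} \<notin> set (path_edges (gp v0 u))"
    proof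
      fix c assume c: "c \<in> ch u - {d}"
      show "{u, c} \<notin> set (path_edges (gp v0 u))"
      proof
        assume a: "{u, c} \<in> set (path_edges (gp v0 u))"
        then have "{u, c} = {last P, u}"
          using pe_at[of "gp v0 u" P u "[]" "{u, c}"] g1 distu by simp
        then have "c = d" using Pd ch_ne[of c u] c by (auto simp: doubleton_eq_iff)
        then show False using c by simp
      qed
    qed
    have am: "\<forall>c\<in>ch u - {d}. \<forall>c'\<in>ch u - {d}. q {u, c} u \<noteq> 1 \<longrightarrow> q {u, c'} u \<noteq> 1 \<longrightarrow> c = c'"
      using atmost[OF pr uV _ nK] by simp
    have kk: "kap q u = (\<Prod>c\<in>ch u - {d}. q {u, c} u) + q {u, d} u * (1 - (\<Prod>c\<in>ch u - {d}. q {u, c} u))"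
      unfolding kap_def using L1[OF fin_ch dch am] by simp
    have bset: "{e \<in> E. u \<in> e \<and> e \<notin> set (path_edges (gp v0 \<alpha>))} = (\<lambda>c. {u, c}) ` (ch u - {d})"
    proof -
      have pe1: "{u, pa u} \<in> set (path_edges (gp v0 \<alpha>))"
        unfolding PR pe_append[of P u R] using pu Rne pe_Cons_hd[OF Rne, of u] by simp
      have pe2: "{u, d} \<in> set (path_edges (gp v0 \<alpha>))"
        unfolding PR' pe_append[of P' d "u # R"] by (simp add: insert_commute)
      have pe3: "{u, c} \<notin> set (path_edges (gp v0 \<alpha>))" if c: "c \<in> ch u - {d}" for c
      proof
        assume a: "{u, c} \<in> set (path_edges (gp v0 \<alpha>))"
        have "{u, c} = {last P, u} \<or> {u, c} = {u, hd R}"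
          using pe_at[OF dist PR a] by auto
        then show False
        proof
          assume "{u, c} = {last P, u}"
          then have "c = d" using Pd ch_ne[of c u] c by (auto simp: doubleton_eq_iff)
          then show False using c by simp
        next
          assume "{u, c} = {u, hd R}"
          then have "c = pa u" using pu ch_ne[of c u] c by (auto simp: doubleton_eq_iff)
          then show False using ch_not_pa[OF uC uS(3)] c by auto
        qed
      qed
      have "{e \<in> E. u \<in> e \<and> e \<notin> set (path_edges (gp v0 \<alpha>))}
          = {e \<in> insert {u, pa u} ((\<lambda>c. {u, c}) ` ch u). e \<notin> set (path_edges (gp v0 \<alpha>))}"
        using edges_at[OF uC uS(3)] by blast
      also have "\<dots> = (\<lambda>c. {u, c}) ` (ch u - {d})"
        using pe1 pe2 pe3 by auto
      finally show ?thesis .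
    qed
    have injd: "inj_on (\<lambda>c. {u, c}) (ch u - {d})" using inj_ch by (rule inj_on_subset) auto
    have bq: "(\<Prod>e\<in>{e \<in> E. u \<in> e \<and> e \<notin> set (path_edges (gp v0 \<alpha>))}. q e u) = (\<Prod>c\<in>ch u - {d}. q {u, c} u)"
      unfolding bset using prod.reindex[OF injd, of "\<lambda>e. q e u"] by simp
    have pset: "{e \<in> E. u \<in> e \<and> e \<in> set (path_edges (gp v0 u))} = {{u, d}}"
    proof
      have "path_edges (P' @ [d, u]) = path_edges (P' @ [d]) @ [{d, u}]" using pe_append[of P' d "[u]"] by simp
      then show "{{u, d}} \<subseteq> {e \<in> E. u \<in> e \<and> e \<in> set (path_edges (gp v0 u))}"
        using ch_edge[OF dch] unfolding g1 Pd by (simp add: insert_commute)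
      show "{e \<in> E. u \<in> e \<and> e \<in> set (path_edges (gp v0 u))} \<subseteq> {{u, d}}"
      proof
        fix e assume e: "e \<in> {e \<in> E. u \<in> e \<and> e \<in> set (path_edges (gp v0 u))}"
        then have "e = {last P, u}" using pe_at[of "gp v0 u" P u "[]" e] g1 distu by simp
        then show "e \<in> {{u, d}}" using Pd by (simp add: insert_commute)
      qed
    qed
    have pq: "(\<Prod>e\<in>{e \<in> E. u \<in> e \<and> e \<in> set (path_edges (gp v0 u))}. q e u) = q {u, d} u"
      unfolding pset by simp
    show ?thesis unfolding bq pq kk by (simp add: algebra_simps)
  qed
  have "mval C E q \<alpha> = 1 + (\<Sum>u\<in>C - {\<alpha>}. Yv q u * (kap q u - 1))" by (rule m_kappa)
  also have "(\<Sum>u\<in>C - {\<alpha>}. Yv q u * (kap q u - 1)) = (\<Sum>u\<in>?S. Yv q u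
     * ((\<Prod>e\<in>{e \<in> E. u \<in> e \<and> e \<notin> set (path_edges (gp v0 \<alpha>))}. q e u) - 1)
     * (1 - (\<Prod>e\<in>{e \<in> E. u \<in> e \<and> e \<in> set (path_edges (gp v0 u))}. q e u)))"
  proof (rule sum.mono_neutral_cong_right)
    show "finite (C - {\<alpha>})" using fin_C by simp
    show "?S \<subseteq> C - {\<alpha>}" using gp_set[OF v0C \<alpha>C] by auto
    show "\<forall>i\<in>C - {\<alpha>} - ?S. Yv q i * (kap q i - 1) = 0" using k1 by auto
  qed (use k2 in auto)
  finally show ?thesis .
qed

end


context tree_ctx
begin

lemma cell_in_pe:
  assumes "is_path C E p" "2 \<le> length p" "a \<in> set p"
  shows "\<exists>e\<in>set (path_edges p). a \<in> e"
proof -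
  obtain i where i: "i < length p" "p ! i = a" using assms(3) by (metis in_set_conv_nth)
  show ?thesis
  proof (cases "Suc i < length p")
    case True
    then have "{p ! i, p ! Suc i} \<in> set (path_edges p)" unfolding pe_set by metis
    then show ?thesis using i by auto
  next
    case False
    then have "Suc (i - 1) < length p" "i = Suc (i - 1)" using i assms(2) by auto
    then have "{p ! (i - 1), p ! i} \<in> set (path_edges p)" unfolding pe_set by metis
    then show ?thesis using i by auto
  qed
qed

lemma Qcell_leaf:
  assumes "is_path C E \<gamma>" "2 \<le> length \<gamma>" "a \<in> set \<gamma>" "valency E a = 1"
  shows "Qcell E q \<gamma> a = 1"
proof -
  obtain e where e: "e \<in> set (path_edges \<gamma>)" "a \<in> e" using cell_in_pe[OF assms(1-3)] by blast
  have eE: "e \<in> E" using e(1) assms(1) by (auto simp: is_path_def)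
  have "card {e \<in> E. a \<in> e} = 1" using assms(4) by (simp add: valency_def)
  then obtain e0 where e0: "{e \<in> E. a \<in> e} = {e0}" by (meson card_1_singletonE)
  have "e \<in> {e \<in> E. a \<in> e}" using eE e(2) by simp
  then have "e = e0" unfolding e0 by simp
  have only: "\<epsilon> = e" if "\<epsilon> \<in> E" "a \<in> \<epsilon>" for \<epsilon>
  proof -
    have "\<epsilon> \<in> {e \<in> E. a \<in> e}" using that by simp
    then show ?thesis unfolding e0 using \<open>e = e0\<close> by simp
  qed
  have "{\<epsilon> \<in> E. a \<in> \<epsilon> \<and> \<epsilon> \<notin> set (path_edges \<gamma>)} = {}" using only e(1) by auto
  then show ?thesis unfolding Qcell_def by (metis prod.empty)
qed

lemma prod_ends:
  fixes F :: "nat \<Rightarrow> int"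
  assumes "2 \<le> n"
  shows "(\<Prod>i<n. F i) = F 0 * (\<Prod>i\<in>{0<..<n - 1}. F i) * F (n - 1)"
proof -
  have s: "{..<n} = insert 0 (insert (n - 1) {0<..<n - 1})" using assms by auto
  have "(\<Prod>i<n. F i) = F 0 * (F (n - 1) * (\<Prod>i\<in>{0<..<n - 1}. F i))"
    unfolding s using assms by (simp add: prod.insert)
  then show ?thesis by (simp add: algebra_simps)
qed

lemma inc_qstar:
  assumes "a \<in> C" "b \<in> C" "a \<noteq> b" "valency E a = 1" "valency E b = 1"
  shows "(\<Prod>\<epsilon>\<in>incident_edges E (gp a b). q_path q \<epsilon> (gp a b)) = Qstar E q (gp a b)"
proof -
  let ?g = "gp a b"
  have p: "is_path C E ?g" "hd ?g = a" "last ?g = b" using gp_path[OF assms(1,2)] by auto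
  have ne: "?g \<noteq> []" using gp_ne[OF assms(1,2)] .
  have dist: "distinct ?g" using gp_distinct[OF assms(1,2)] .
  have len: "2 \<le> length ?g"
  proof (rule ccontr)
    assume "\<not> 2 \<le> length ?g"
    moreover have "0 < length ?g" using ne by simp
    ultimately have "length ?g = 1" by linarith
    then have "hd ?g = last ?g" using ne by (simp add: hd_conv_nth last_conv_nth)
    then show False using p assms(3) by simp
  qed
  have "(\<Prod>\<epsilon>\<in>incident_edges E ?g. q_path q \<epsilon> ?g) = (\<Prod>z\<in>set ?g. Qcell E q ?g z)"
    using inc_prod[OF p(1)] .
  also have "\<dots> = (\<Prod>i<length ?g. Qcell E q ?g (?g ! i))"
  proof -
    have "set ?g = (\<lambda>i. ?g ! i) ` {..<length ?g}" by (auto simp: in_set_conv_nth image_def)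
    moreover have "inj_on (\<lambda>i. ?g ! i) {..<length ?g}" using dist by (auto simp: inj_on_def nth_eq_iff_index_eq)
    ultimately show ?thesis using prod.reindex[of "\<lambda>i. ?g ! i" "{..<length ?g}" "Qcell E q ?g"] by simp
  qed
  also have "\<dots> = Qcell E q ?g (?g ! 0) * Qstar E q ?g * Qcell E q ?g (?g ! (length ?g - 1))"
    unfolding Qstar_def using prod_ends[OF len] by simp
  also have "Qcell E q ?g (?g ! 0) = 1"
  proof -
    have "?g ! 0 = a" using p(2) ne by (simp add: hd_conv_nth)
    moreover have "a \<in> set ?g" using p(2) ne hd_in_set by metis
    ultimately show ?thesis using Qcell_leaf[OF p(1) len, of a q] assms(4) by simp
  qed
  also have "Qcell E q ?g (?g ! (length ?g - 1)) = 1"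
  proof -
    have "?g ! (length ?g - 1) = b" using p(3) ne by (simp add: last_conv_nth)
    moreover have "b \<in> set ?g" using p(3) ne last_in_set by metis
    ultimately show ?thesis using Qcell_leaf[OF p(1) len, of b q] assms(5) by simp
  qed
  finally show ?thesis by simp
qed

end

lemma pairs_sum:
  fixes h :: "'b \<Rightarrow> 'b \<Rightarrow> int"
  assumes "finite S"
  shows "(\<Sum>(a, b)\<in>{(a, b) \<in> S \<times> S. a \<noteq> b}. h a b) = (\<Sum>b\<in>S. \<Sum>a\<in>S - {b}. h a b)"
proof -
  have "{(a, b) \<in> S \<times> S. a \<noteq> b} = Sigma S (\<lambda>a. S - {a})" by auto
  then have "(\<Sum>(a, b)\<in>{(a, b) \<in> S \<times> S. a \<noteq> b}. h a b) = (\<Sum>a\<in>S. \<Sum>b\<in>S - {a}. h a b)"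
    using sum.Sigma[of S "\<lambda>a. S - {a}" h] assms by simp
  also have "\<dots> = (\<Sum>a\<in>S. \<Sum>b\<in>S. if a = b then 0 else h a b)"
  proof (rule sum.cong[OF refl])
    fix a assume "a \<in> S"
    then show "(\<Sum>b\<in>S - {a}. h a b) = (\<Sum>b\<in>S. if a = b then 0 else h a b)"
      using assms by (simp add: sum.If_cases Diff_eq Int_commute)
  qed
  also have "\<dots> = (\<Sum>b\<in>S. \<Sum>a\<in>S. if a = b then 0 else h a b)" by (rule sum.swap)
  also have "\<dots> = (\<Sum>b\<in>S. \<Sum>a\<in>S - {b}. h a b)"
  proof (rule sum.cong[OF refl])
    fix b assume "b \<in> S"
    then show "(\<Sum>a\<in>S. if a = b then 0 else h a b) = (\<Sum>a\<in>S - {b}. h a b)"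
      using assms by (simp add: sum.If_cases Diff_eq Int_commute)
  qed
  finally show ?thesis .
qed

lemma MDecomp:
  assumes tree: "is_tree (V \<union> A) E" and VA: "V \<inter> A = {}"
    and Aval: "\<forall>a\<in>A. valency E a = 1" and f1: "\<forall>a\<in>A - zero_arrows A f. f a = 1"
  shows "Mval V A E f q = (\<Sum>\<alpha>\<in>A - zero_arrows A f. mval (V \<union> A) E q \<alpha>)
     - Iform V A E f q (A - zero_arrows A f) (A - zero_arrows A f)"
proof -
  interpret tree_ctx "V \<union> A" E by unfold_locales (rule tree)
  let ?A0 = "zero_arrows A f"
  let ?A1 = "A - ?A0"
  let ?X = "\<lambda>v \<alpha>. (\<Prod>\<epsilon>\<in>incident_edges E (gp v \<alpha>). q_path q \<epsilon> (gp v \<alpha>))"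
  have fC: "finite (V \<union> A)" using fin_C .
  have fA1: "finite ?A1" and fV0: "finite (V \<union> ?A0)" using fC by (auto simp: zero_arrows_def)
  have A0A: "?A0 \<subseteq> A" by (auto simp: zero_arrows_def)
  have xc: "xcoef V A E f q v \<alpha> = ?X v \<alpha>" if "\<alpha> \<in> ?A1" for v \<alpha>
    using f1 that by (simp add: xcoef_def Let_def)
  have M1: "Mval V A E f q = (\<Sum>\<alpha>\<in>?A1. - (\<Sum>v\<in>V \<union> ?A0. ?X v \<alpha> * (int (valency E v) - 2)))"
  proof -
    have "Mval V A E f q = - (\<Sum>v\<in>V \<union> ?A0. \<Sum>\<alpha>\<in>?A1. ?X v \<alpha> * (int (valency E v) - 2))"
      unfolding Mval_def Ncoef_def using xc by (simp add: sum_distrib_right)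
    also have "\<dots> = - (\<Sum>\<alpha>\<in>?A1. \<Sum>v\<in>V \<union> ?A0. ?X v \<alpha> * (int (valency E v) - 2))"
      using sum.swap[of "\<lambda>v \<alpha>. ?X v \<alpha> * (int (valency E v) - 2)" ?A1 "V \<union> ?A0"] by simp
    finally show ?thesis by (simp add: sum_negf)
  qed
  have m1: "mval (V \<union> A) E q \<alpha> = - (\<Sum>v\<in>V \<union> ?A0. ?X v \<alpha> * (int (valency E v) - 2))
      + (\<Sum>\<beta>\<in>?A1 - {\<alpha>}. ?X \<beta> \<alpha>)" if a: "\<alpha> \<in> ?A1" for \<alpha>
  proof -
    have split: "V \<union> A - {\<alpha>} = (V \<union> ?A0) \<union> (?A1 - {\<alpha>})" using a A0A VA by auto
    have disj: "(V \<union> ?A0) \<inter> (?A1 - {\<alpha>}) = {}" using VA A0A by auto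
    have "mval (V \<union> A) E q \<alpha> = - ((\<Sum>v\<in>V \<union> ?A0. ?X v \<alpha> * (int (valency E v) - 2))
        + (\<Sum>v\<in>?A1 - {\<alpha>}. ?X v \<alpha> * (int (valency E v) - 2)))"
      unfolding mval_def split
      using sum.union_disjoint[OF fV0 _ disj, where g="\<lambda>v. ?X v \<alpha> * (int (valency E v) - 2)"] fA1 by simp
    also have "(\<Sum>v\<in>?A1 - {\<alpha>}. ?X v \<alpha> * (int (valency E v) - 2)) = - (\<Sum>v\<in>?A1 - {\<alpha>}. ?X v \<alpha>)"
      using Aval by (simp add: sum_negf[symmetric])
    finally show ?thesis by simp
  qed
  have I1: "Iform V A E f q ?A1 ?A1 = (\<Sum>\<alpha>\<in>?A1. \<Sum>\<beta>\<in>?A1 - {\<alpha>}. ?X \<beta> \<alpha>)"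
  proof -
    have "Iform V A E f q ?A1 ?A1 = (\<Sum>(a, b)\<in>{(a, b) \<in> ?A1 \<times> ?A1. a \<noteq> b}. Qstar E q (gp a b))"
      unfolding Iform_def using f1 by (intro sum.cong) auto
    also have "\<dots> = (\<Sum>b\<in>?A1. \<Sum>a\<in>?A1 - {b}. Qstar E q (gp a b))" by (rule pairs_sum[OF fA1])
    also have "\<dots> = (\<Sum>\<alpha>\<in>?A1. \<Sum>\<beta>\<in>?A1 - {\<alpha>}. ?X \<beta> \<alpha>)"
    proof (intro sum.cong refl)
      fix \<alpha> \<beta> assume "\<alpha> \<in> ?A1" "\<beta> \<in> ?A1 - {\<alpha>}"
      then show "Qstar E q (gp \<beta> \<alpha>) = ?X \<beta> \<alpha>"
        using inc_qstar[of \<beta> \<alpha> q] Aval by auto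
    qed
    finally show ?thesis .
  qed
  show ?thesis unfolding M1 I1 using m1 by (simp add: sum.distrib sum_subtractf sum_negf)
qed


lemma ip_mono: "is_path C E p \<Longrightarrow> C \<subseteq> C' \<Longrightarrow> E \<subseteq> E' \<Longrightarrow> is_path C' E' p"
  unfolding is_path_def by blast

lemma pe_nth: "j < length p - 1 \<Longrightarrow> path_edges p ! j = {p ! j, p ! Suc j}"
  by (simp add: path_edges_def)

lemma length_pe: "length (path_edges p) = length p - 1"
  by (simp add: path_edges_def)

context tree_ctx
begin

lemma gp_cells_in_edges:
  assumes "x \<in> C" "y \<in> C" "z \<in> set (gp x y)" "x \<noteq> y"
  shows "\<exists>e\<in>set (path_edges (gp x y)). z \<in> e"
proof -
  have p: "is_path C E (gp x y)" "hd (gp x y) = x" "last (gp x y) = y" using gp_path assms by auto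
  have ne: "gp x y \<noteq> []" using gp_ne assms by auto
  have "2 \<le> length (gp x y)"
  proof (rule ccontr)
    assume "\<not> 2 \<le> length (gp x y)"
    moreover have "0 < length (gp x y)" using ne by simp
    ultimately have "length (gp x y) = 1" by linarith
    then have "hd (gp x y) = last (gp x y)" using ne by (simp add: hd_conv_nth last_conv_nth)
    then show False using p assms(4) by simp
  qed
  then show ?thesis using cell_in_pe[OF p(1) _ assms(3)] by blast
qed

lemma pe_tri:
  assumes "x \<in> C" "y \<in> C" "z \<in> C"
  shows "set (path_edges (gp x z)) \<subseteq> set (path_edges (gp x y)) \<union> set (path_edges (gp y z))"
proof -
  let ?L1 = "gp x y" and ?L2 = "gp y z"
  let ?P = "\<lambda>u. u \<notin> set ?L2"
  define P0 where "P0 = takeWhile ?P ?L1"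
  define R0 where "R0 = dropWhile ?P ?L1"
  have L1: "?L1 = P0 @ R0" unfolding P0_def R0_def by simp
  have "y \<in> set ?L1" using gp_path[OF assms(1,2)] gp_ne[OF assms(1,2)] by (metis last_in_set)
  moreover have "y \<in> set ?L2" using gp_path[OF assms(2,3)] gp_ne[OF assms(2,3)] by (metis hd_in_set)
  ultimately have "R0 \<noteq> []" unfolding R0_def by (auto simp: dropWhile_eq_Nil_conv)
  then obtain w R where R0: "R0 = w # R" by (cases R0) auto
  have wL2: "w \<in> set ?L2" using hd_dropWhile[of ?P ?L1] R0 unfolding R0_def by auto
  have P0n: "\<forall>u\<in>set P0. u \<notin> set ?L2" unfolding P0_def by (auto dest: set_takeWhileD)
  obtain U S where L2: "?L2 = U @ w # S" using wL2 by (meson split_list)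
  have L1': "?L1 = P0 @ w # R" using L1 R0 by simp
  have wC: "w \<in> C" using wL2 gp_set[OF assms(2,3)] by blast
  have g1: "gp x w = P0 @ [w]" using gp_split[OF assms(1,2) L1'] by simp
  have g2: "gp w z = w # S" using gp_split[OF assms(2,3) L2] by simp
  have "set (gp x w) \<inter> set (gp w z) = {w}"
  proof -
    have "set (w # S) \<subseteq> set ?L2" using L2 by auto
    then show ?thesis unfolding g1 g2 using P0n by auto
  qed
  then have "gp x z = gp x w @ tl (gp w z)" using gp_concat[OF assms(1) wC assms(3)] by blast
  then have g: "gp x z = P0 @ w # S" using g1 g2 by simp
  have "set (path_edges (gp x z)) = set (path_edges (P0 @ [w])) \<union> set (path_edges (w # S))"
    unfolding g pe_append[of P0 w S] by simp
  moreover have "set (path_edges (P0 @ [w])) \<subseteq> set (path_edges ?L1)"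
    unfolding L1' pe_append[of P0 w R] by simp
  moreover have "set (path_edges (w # S)) \<subseteq> set (path_edges ?L2)"
    unfolding L2 pe_append[of U w S] by simp
  ultimately show ?thesis by blast
qed

end

lemma tree_sub:
  assumes tr: "is_tree C E" and C1: "C1 \<subseteq> C" and E1: "E1 \<subseteq> E" and eC1: "\<forall>e\<in>E1. e \<subseteq> C1"
    and cl: "\<forall>x\<in>C1. \<forall>y\<in>C1. set (path_edges (gpath C E x y)) \<subseteq> E1"
  shows "is_tree C1 E1 \<and> (\<forall>x\<in>C1. \<forall>y\<in>C1. gpath C1 E1 x y = gpath C E x y)"
proof -
  interpret tree_ctx C E by unfold_locales (rule tr)
  have cells: "set (gp x y) \<subseteq> C1" if "x \<in> C1" "y \<in> C1" for x y
  proof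
    fix z assume z: "z \<in> set (gp x y)"
    have xy: "x \<in> C" "y \<in> C" using that C1 by auto
    show "z \<in> C1"
    proof (cases "x = y")
      case True
      then show ?thesis using z gp_self xy that by simp
    next
      case False
      then obtain e where "e \<in> set (path_edges (gp x y))" "z \<in> e" using gp_cells_in_edges[OF xy z] by blast
      then show ?thesis using cl that eC1 by blast
    qed
  qed
  have pth: "is_path C1 E1 (gp x y) \<and> hd (gp x y) = x \<and> last (gp x y) = y" if "x \<in> C1" "y \<in> C1" for x y
    using gp_path[of x y] that C1 cells[OF that] cl unfolding is_path_def by auto
  have uq: "p = gp x y" if "is_path C1 E1 p" "hd p = x" "last p = y" for p x y
    using gp_eq[of p x y] ip_mono[OF that(1) C1 E1] that by simp
  have g: "is_graph C1 E1"
    using fin_C fin_E C1 E1 eC1 edge_card unfolding is_graph_def by (auto intro: finite_subset)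
  have t: "is_tree C1 E1" unfolding is_tree_def
  proof (intro conjI ballI g)
    fix x y assume xy: "x \<in> C1" "y \<in> C1"
    show "\<exists>!p. is_path C1 E1 p \<and> hd p = x \<and> last p = y"
    proof (rule ex1I[of _ "gp x y"])
      show "is_path C1 E1 (gp x y) \<and> hd (gp x y) = x \<and> last (gp x y) = y" using pth[OF xy] .
    next
      fix p assume "is_path C1 E1 p \<and> hd p = x \<and> last p = y"
      then show "p = gp x y" using uq by blast
    qed
  qed
  moreover have "\<forall>x\<in>C1. \<forall>y\<in>C1. gpath C1 E1 x y = gp x y"
  proof (intro ballI)
    fix x y assume xy: "x \<in> C1" "y \<in> C1"
    show "gpath C1 E1 x y = gp x y"
      unfolding gpath_def[of C1 E1] using pth[OF xy] uq by (intro the_equality) auto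
  qed
  ultimately show ?thesis by blast
qed

lemma ip_unmap:
  assumes "is_path (h ` C) (image h ` E) (map h p)" "inj h"
  shows "is_path C E p"
proof -
  have injE: "inj (image h)" using inj_on_image_Pow[OF assms(2)] by simp
  have a: "map h p \<noteq> []" "set (map h p) \<subseteq> h ` C" "set (map (image h) (path_edges p)) \<subseteq> image h ` E"
      "distinct (map (image h) (path_edges p))"
    using assms(1) unfolding is_path_def pe_map by auto
  have "set p \<subseteq> C"
  proof
    fix z assume "z \<in> set p"
    then have "h z \<in> h ` C" using a(2) by auto
    then show "z \<in> C" using inj_image_mem_iff[OF assms(2), of z C] by simp
  qed
  moreover have "set (path_edges p) \<subseteq> E"
  proof
    fix e assume "e \<in> set (path_edges p)"
    then have "h ` e \<in> image h ` E" using a(3) by auto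
    then show "e \<in> E" using inj_image_mem_iff[OF injE, of e E] by simp
  qed
  moreover have "distinct (path_edges p)" using a(4) by (simp add: distinct_map)
  ultimately show ?thesis using a(1) unfolding is_path_def by simp
qed

lemma tree_img:
  assumes tr: "is_tree C E" and h: "inj h"
  shows "is_tree (h ` C) (image h ` E) \<and> (\<forall>x\<in>C. \<forall>y\<in>C. gpath (h ` C) (image h ` E) (h x) (h y) = map h (gpath C E x y))"
proof -
  interpret tree_ctx C E by unfold_locales (rule tr)
  have injE: "inj (image h)" using inj_on_image_Pow[OF h] by simp
  have fwd: "is_path (h ` C) (image h ` E) (map h p)" if "is_path C E p" for p
    using that injE unfolding is_path_def by (auto simp: pe_map distinct_map inj_on_subset[OF injE])
  have bwd: "is_path C E (map (inv h) p')" and bwd2: "p' = map h (map (inv h) p')"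
    if "is_path (h ` C) (image h ` E) p'" for p'
  proof -
    have sp: "set p' \<subseteq> h ` C" using that by (simp add: is_path_def)
    have "map (\<lambda>z. h (inv h z)) p' = p'"
    proof (rule map_idI)
      fix z assume "z \<in> set p'"
      then have "z \<in> range h" using sp by blast
      then show "h (inv h z) = z" by (rule f_inv_into_f)
    qed
    then show eq: "p' = map h (map (inv h) p')" by (simp add: comp_def)
    have "is_path (h ` C) (image h ` E) (map h (map (inv h) p'))" using that eq by metis
    then show "is_path C E (map (inv h) p')" using ip_unmap h by blast
  qed
  have g: "is_graph (h ` C) (image h ` E)"
    using fin_C fin_E edge_sub edge_card h unfolding is_graph_def
    by (auto simp: card_image inj_on_subset image_mono)
  have ex: "is_path (h ` C) (image h ` E) (map h (gp x y)) \<and> hd (map h (gp x y)) = h x \<and> last (map h (gp x y)) = h y"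
    if "x \<in> C" "y \<in> C" for x y
    using fwd gp_path[OF that] gp_ne[OF that] by (simp add: hd_map last_map)
  have uq: "p' = map h (gp x y)" if "is_path (h ` C) (image h ` E) p'" "hd p' = h x" "last p' = h y" for p' x y
  proof -
    have ne: "p' \<noteq> []" using that by (simp add: is_path_def)
    let ?p = "map (inv h) p'"
    have "hd ?p = x" using that(2) ne h by (simp add: hd_map)
    moreover have "last ?p = y" using that(3) ne h by (simp add: last_map)
    ultimately have "gp x y = ?p" using gp_eq bwd[OF that(1)] by blast
    then show ?thesis using bwd2[OF that(1)] by simp
  qed
  have t: "is_tree (h ` C) (image h ` E)" unfolding is_tree_def
  proof (intro conjI ballI g)
    fix x' y' assume xy: "x' \<in> h ` C" "y' \<in> h ` C"
    then obtain x y where x: "x \<in> C" "x' = h x" and y: "y \<in> C" "y' = h y" by blast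
    show "\<exists>!p. is_path (h ` C) (image h ` E) p \<and> hd p = x' \<and> last p = y'"
    proof (rule ex1I[of _ "map h (gp x y)"])
      show "is_path (h ` C) (image h ` E) (map h (gp x y)) \<and> hd (map h (gp x y)) = x' \<and> last (map h (gp x y)) = y'"
        using ex[OF x(1) y(1)] x y by simp
    next
      fix p assume "is_path (h ` C) (image h ` E) p \<and> hd p = x' \<and> last p = y'"
      then show "p = map h (gp x y)" using uq x y by blast
    qed
  qed
  moreover have "\<forall>x\<in>C. \<forall>y\<in>C. gpath (h ` C) (image h ` E) (h x) (h y) = map h (gp x y)"
  proof (intro ballI)
    fix x y assume xy: "x \<in> C" "y \<in> C"
    show "gpath (h ` C) (image h ` E) (h x) (h y) = map h (gp x y)"
      unfolding gpath_def[of "h ` C"] using ex[OF xy] uq by (intro the_equality) auto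
  qed
  ultimately show ?thesis by blast
qed


lemma tree_leaf:
  assumes tr: "is_tree C E" and v: "v \<in> C" and l: "l \<notin> C"
  shows "is_tree (insert l C) (insert {v, l} E) \<and>
    (\<forall>x\<in>C. \<forall>y\<in>C. gpath (insert l C) (insert {v, l} E) x y = gpath C E x y)"
proof -
  interpret tree_ctx C E by unfold_locales (rule tr)
  let ?C = "insert l C" and ?E = "insert {v, l} E"
  have noL: "l \<notin> e" if "e \<in> E" for e using edge_sub[OF that] l by blast
  have vl: "v \<noteq> l" using v l by blast
  have mono': "is_path ?C ?E p" if "is_path C E p" for p
    using ip_mono[OF that subset_insertI subset_insertI] .
  have K1: "is_path C E p" if "is_path ?C ?E p" "l \<notin> set p" for p
  proof -
    have "set p \<subseteq> C" using that unfolding is_path_def by auto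
    moreover have "set (path_edges p) \<subseteq> E"
    proof
      fix e assume e: "e \<in> set (path_edges p)"
      then have "e \<in> ?E" using that(1) unfolding is_path_def by auto
      moreover have "l \<notin> e" using pe_sub_set[OF e] that(2) by blast
      ultimately show "e \<in> E" by auto
    qed
    ultimately show ?thesis using that(1) unfolding is_path_def by auto
  qed
  have K3: False if "is_path ?C ?E p" "j1 < j2" "j2 < length p - 1"
      "l \<in> path_edges p ! j1" "l \<in> path_edges p ! j2" for p j1 j2
  proof -
    have lp: "length (path_edges p) = length p - 1" by (rule length_pe)
    have "path_edges p ! j1 \<in> set (path_edges p)" "path_edges p ! j2 \<in> set (path_edges p)"
      using that(2,3) lp by (auto intro!: nth_mem)
    then have in1: "path_edges p ! j1 \<in> ?E" "path_edges p ! j2 \<in> ?E"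
      using that(1) unfolding is_path_def by auto
    have "path_edges p ! j1 = {v, l}" using in1(1) that(4) noL by auto
    moreover have "path_edges p ! j2 = {v, l}" using in1(2) that(5) noL by auto
    moreover have "distinct (path_edges p)" using that(1) by (simp add: is_path_def)
    ultimately show False using that(2,3) lp nth_eq_iff_index_eq[of "path_edges p" j1 j2] by auto
  qed
  have K2: "i = 0 \<or> i = length p - 1" if "is_path ?C ?E p" "i < length p" "p ! i = l" for p i
  proof (rule ccontr)
    assume "\<not> (i = 0 \<or> i = length p - 1)"
    then have i: "0 < i" "i < length p - 1" using that(2) by auto
    have "l \<in> path_edges p ! (i - 1)" using i that(3) by (simp add: pe_nth)
    moreover have "l \<in> path_edges p ! i" using i that(3) by (simp add: pe_nth)
    ultimately show False using K3[OF that(1), of "i - 1" i] i by simp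
  qed
  have Lends: "l \<notin> set p" if "is_path ?C ?E p" "hd p \<noteq> l" "last p \<noteq> l" for p
  proof
    assume "l \<in> set p"
    then obtain i where i: "i < length p" "p ! i = l" by (metis in_set_conv_nth)
    have ne: "p \<noteq> []" using i by auto
    show False using K2[OF that(1) i] i that(2,3) ne by (auto simp: hd_conv_nth last_conv_nth)
  qed
  have cand_l: "is_path ?C ?E (l # gp v y) \<and> hd (l # gp v y) = l \<and> last (l # gp v y) = y" if y: "y \<in> C" for y
  proof -
    have p: "is_path C E (gp v y)" "hd (gp v y) = v" "last (gp v y) = y" using gp_path[OF v y] by auto
    have ne: "gp v y \<noteq> []" using gp_ne[OF v y] .
    then obtain r where r: "gp v y = v # r" using p(2) by (metis list.collapse)
    have "{l, v} \<notin> set (path_edges (gp v y))"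
    proof
      assume "{l, v} \<in> set (path_edges (gp v y))"
      then have "{l, v} \<in> E" using p(1) unfolding is_path_def by auto
      then show False using noL by auto
    qed
    moreover have "is_path ?C ?E (gp v y)" using mono'[OF p(1)] .
    ultimately have "is_path ?C ?E (l # v # r)" using r by (simp add: ip_Cons2 insert_commute)
    then show ?thesis using r p ne by simp
  qed
  have uq_l: "p = (if y = l then [l] else l # gp v y)"
    if a: "is_path ?C ?E p" "hd p = l" "last p = y" for p y
  proof -
    have ne: "p \<noteq> []" using a(1) by (simp add: is_path_def)
    then obtain p' where pp: "p = l # p'" using a(2) by (metis list.collapse)
    show ?thesis
    proof (cases "p' = []")
      case True
      then show ?thesis using pp a(3) by simp
    next
      case False
      then obtain a r where ar: "p' = a # r" by (cases p') auto
      have ip: "{l, a} \<in> ?E" "is_path ?C ?E (a # r)" "{l, a} \<notin> set (path_edges (a # r))"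
        using a(1) pp ar by (auto simp: ip_Cons2)
      have "{l, a} = {v, l}" using ip(1) noL by auto
      then have av: "a = v" using vl by (auto simp: doubleton_eq_iff)
      have yl: "y \<noteq> l"
      proof
        assume yl: "y = l"
        show False
        proof (cases r)
          case Nil
          then have "a = l" using a(3) pp ar yl by simp
          then show False using av vl by simp
        next
          case (Cons b r')
          have len: "length p = length r + 2" using pp ar by simp
          have "l \<in> path_edges p ! 0" using pp ar by simp
          moreover have "l \<in> path_edges p ! (length p - 2)"
          proof -
            have "p ! (length p - 1) = l" using a(3) yl ne by (simp add: last_conv_nth)
            moreover have "length p - 2 < length p - 1" "Suc (length p - 2) = length p - 1"
              using len by auto
            ultimately show ?thesis using pe_nth[of "length p - 2" p] by simp
          qed
          moreover have "0 < length p - 2" "length p - 2 < length p - 1" using len Cons by auto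
          ultimately show False using K3[OF a(1), of 0 "length p - 2"] by simp
        qed
      qed
      have "l \<notin> set p'"
      proof
        assume "l \<in> set p'"
        then obtain j where j: "j < length p'" "p' ! j = l" by (metis in_set_conv_nth)
        have "p ! Suc j = l" "Suc j < length p" using j pp by auto
        then have "Suc j = length p - 1" using K2[OF a(1)] by blast
        then have "j = length p' - 1" using pp by simp
        then have "last p' = l" using j False by (simp add: last_conv_nth)
        then have "last p = l" using pp False by simp
        then show False using a(3) yl by simp
      qed
      then have "is_path C E p'" using K1 ip(2) ar by simp
      moreover have "hd p' = v" using ar av by simp
      moreover have "last p' = y" using a(3) pp False by simp
      ultimately have "p' = gp v y" using gp_eq by simp
      then show ?thesis using pp yl by simp
    qed
  qed
  have g: "is_graph ?C ?E"
    using fin_C fin_E edge_sub edge_card v vl unfolding is_graph_def by auto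
  have ex: "\<exists>!p. is_path ?C ?E p \<and> hd p = x \<and> last p = y" if xy: "x \<in> ?C" "y \<in> ?C" for x y
  proof (cases "x = l")
    case True
    show ?thesis
    proof (cases "y = l")
      case True
      show ?thesis
      proof (rule ex1I[of _ "[l]"])
        show "is_path ?C ?E [l] \<and> hd [l] = x \<and> last [l] = y" using \<open>x = l\<close> True by simp
      next
        fix p assume "is_path ?C ?E p \<and> hd p = x \<and> last p = y"
        then show "p = [l]" using uq_l[of p y] \<open>x = l\<close> True by simp
      qed
    next
      case False
      then have yC: "y \<in> C" using xy by simp
      show ?thesis
      proof (rule ex1I[of _ "l # gp v y"])
        show "is_path ?C ?E (l # gp v y) \<and> hd (l # gp v y) = x \<and> last (l # gp v y) = y"
          using cand_l[OF yC] \<open>x = l\<close> by simp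
      next
        fix p assume "is_path ?C ?E p \<and> hd p = x \<and> last p = y"
        then show "p = l # gp v y" using uq_l[of p y] \<open>x = l\<close> False by simp
      qed
    qed
  next
    case False
    then have xC: "x \<in> C" using xy by simp
    show ?thesis
    proof (cases "y = l")
      case True
      show ?thesis
      proof (rule ex1I[of _ "rev (l # gp v x)"])
        have c: "is_path ?C ?E (l # gp v x)" "last (l # gp v x) = x" using cand_l[OF xC] by auto
        have "is_path ?C ?E (rev (l # gp v x))" using c(1) ip_rev by blast
        moreover have "hd (rev (l # gp v x)) = x" using c(2) gp_ne[OF v xC] by (simp add: hd_rev hd_append)
        moreover have "last (rev (l # gp v x)) = y" using True by (simp add: last_rev)
        ultimately show "is_path ?C ?E (rev (l # gp v x)) \<and> hd (rev (l # gp v x)) = x \<and> last (rev (l # gp v x)) = y"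
          by blast
      next
        fix p assume p: "is_path ?C ?E p \<and> hd p = x \<and> last p = y"
        then have ne: "p \<noteq> []" by (simp add: is_path_def)
        have "is_path ?C ?E (rev p)" "hd (rev p) = l" "last (rev p) = x"
          using p ne True by (auto simp: hd_rev last_rev)
        then have "rev p = l # gp v x" using uq_l[of "rev p" x] False by simp
        then show "p = rev (l # gp v x)" by (metis rev_rev_ident)
      qed
    next
      case yl: False
      then have yC: "y \<in> C" using xy by simp
      show ?thesis
      proof (rule ex1I[of _ "gp x y"])
        show "is_path ?C ?E (gp x y) \<and> hd (gp x y) = x \<and> last (gp x y) = y"
          using gp_path[OF xC yC] mono' by blast
      next
        fix p assume p: "is_path ?C ?E p \<and> hd p = x \<and> last p = y"
        then have "l \<notin> set p" using Lends False yl by simp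
        then have "is_path C E p" using K1 p by simp
        then show "p = gp x y" using gp_eq p by simp
      qed
    qed
  qed
  have t: "is_tree ?C ?E" unfolding is_tree_def using g ex by blast
  moreover have "\<forall>x\<in>C. \<forall>y\<in>C. gpath ?C ?E x y = gp x y"
  proof (intro ballI)
    fix x y assume xy: "x \<in> C" "y \<in> C"
    have "is_path ?C ?E (gp x y) \<and> hd (gp x y) = x \<and> last (gp x y) = y"
      using gp_path[OF xy] mono' by blast
    moreover have "\<exists>!p. is_path ?C ?E p \<and> hd p = x \<and> last p = y" using ex xy by simp
    ultimately show "gpath ?C ?E x y = gp x y" unfolding gpath_def by (rule the1_equality[rotated])
  qed
  ultimately show ?thesis by blast
qed


locale TXctx =
  fixes V A :: "'a set" and E :: "'a set set" and f :: "'a \<Rightarrow> int" and q :: "'a set \<Rightarrow> 'a \<Rightarrow> int"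
    and v0 :: 'a and X :: "'a set"
  assumes dprt: "decorated_pseudo_rooted_tree V A E f q v0"
    and XA1: "X \<subseteq> A - zero_arrows A f" and Xne: "X \<noteq> {}"
begin

lemma dt: "decorated_tree V A E f q" and pr: "pseudo_root V A E q v0"
  using dprt by (auto simp: decorated_pseudo_rooted_tree_def)

lemma tr: "is_tree (V \<union> A) E" and VA: "V \<inter> A = {}" and Aval: "\<forall>a\<in>A. valency E a = 1"
  and finV: "finite V" and finA: "finite A"
  and qA: "\<forall>e\<in>E. \<forall>\<alpha>\<in>A. \<alpha> \<in> e \<longrightarrow> q e \<alpha> = 1"
  using dt by (auto simp: decorated_tree_def)

sublocale T: tree_ctx "V \<union> A" E by unfold_locales (rule tr)

abbreviation "sE \<equiv> subE V A E v0 X"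
abbreviation "sV \<equiv> subV V A E v0 X"
abbreviation "W \<equiv> sV \<union> X"
abbreviation "N \<equiv> newarr_base V A E q v0 X"

lemma v0V: "v0 \<in> V" and q0: "\<forall>e\<in>E. v0 \<in> e \<longrightarrow> q e v0 = 1"
  using pr by (auto simp: pseudo_root_def)

lemma v0C: "v0 \<in> V \<union> A" using v0V by simp

lemma XA: "X \<subseteq> A" using XA1 by auto

lemma XC: "\<alpha> \<in> X \<Longrightarrow> \<alpha> \<in> V \<union> A" using XA by auto

lemma spine_cells:
  assumes a: "\<alpha> \<in> X" and z: "z \<in> set (T.gp v0 \<alpha>)"
  shows "z \<in> V \<or> z = \<alpha>"
proof (rule ccontr)
  assume nz: "\<not> (z \<in> V \<or> z = \<alpha>)"
  have aC: "\<alpha> \<in> V \<union> A" using XC[OF a] .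
  have zC: "z \<in> V \<union> A" using z T.gp_set[OF v0C aC] by blast
  then have zA: "z \<in> A" using nz by simp
  have zv0: "z \<noteq> v0" using nz v0V by auto
  obtain P R where PR: "T.gp v0 \<alpha> = P @ z # R" using z by (meson split_list)
  have p: "is_path (V \<union> A) E (T.gp v0 \<alpha>)" "hd (T.gp v0 \<alpha>) = v0" "last (T.gp v0 \<alpha>) = \<alpha>"
    using T.gp_path[OF v0C aC] by auto
  have Pne: "P \<noteq> []" using PR p(2) zv0 by (cases P) auto
  have Rne: "R \<noteq> []" using PR p(3) nz by (cases R) auto
  have dist: "distinct (P @ z # R)" using T.gp_distinct[OF v0C aC] PR by simp
  have e1: "{last P, z} \<in> set (path_edges (T.gp v0 \<alpha>))"
  proof -
    have eq: "P @ [z] = butlast P @ last P # [z]" using Pne by simp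
    have "path_edges (P @ [z]) = path_edges (butlast P @ [last P]) @ [{last P, z}]"
      unfolding eq pe_append[of "butlast P" "last P" "[z]"] by simp
    then show ?thesis unfolding PR pe_append[of P z R] by simp
  qed
  have e2: "{z, hd R} \<in> set (path_edges (T.gp v0 \<alpha>))"
    unfolding PR pe_append[of P z R] using pe_Cons_hd[OF Rne, of z] by simp
  have E12: "{last P, z} \<in> E" "{z, hd R} \<in> E" using e1 e2 p(1) unfolding is_path_def by auto
  have "last P \<noteq> hd R" using dist Pne Rne by (metis disjoint_iff_not_equal distinct_append hd_in_set
        last_in_set list.set_intros(2))
  then have ne: "{last P, z} \<noteq> {z, hd R}" using dist Pne by (auto simp: doubleton_eq_iff)
  have "{{last P, z}, {z, hd R}} \<subseteq> {e \<in> E. z \<in> e}" using E12 by auto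
  then have "card {{last P, z}, {z, hd R}} \<le> card {e \<in> E. z \<in> e}"
    using T.fin_E by (intro card_mono) auto
  then have "2 \<le> valency E z" using ne by (simp add: valency_def)
  then show False using Aval zA by simp
qed

lemma spine_W: "\<alpha> \<in> X \<Longrightarrow> set (T.gp v0 \<alpha>) \<subseteq> W"
  using spine_cells by (auto simp: subV_def)

lemma W_C: "W \<subseteq> V \<union> A" using XA by (auto simp: subV_def)

lemma sE_E: "sE \<subseteq> E" by (auto simp: subE_def)

lemma sE_W: "e \<in> sE \<Longrightarrow> e \<subseteq> W"
  using spine_W pe_sub_set by (fastforce simp: subE_def)

lemma W_spine: "x \<in> W \<Longrightarrow> \<exists>\<alpha>\<in>X. x \<in> set (T.gp v0 \<alpha>)"
proof -
  assume "x \<in> W"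
  then show ?thesis
  proof
    assume "x \<in> sV" then show ?thesis by (auto simp: subV_def)
  next
    assume x: "x \<in> X"
    have "x \<in> set (T.gp v0 x)" using T.gp_path[OF v0C XC[OF x]] T.gp_ne[OF v0C XC[OF x]]
      by (metis last_in_set)
    then show ?thesis using x by blast
  qed
qed

lemma pe_v0_W: "x \<in> W \<Longrightarrow> set (path_edges (T.gp v0 x)) \<subseteq> sE"
proof -
  assume x: "x \<in> W"
  obtain \<alpha> where a: "\<alpha> \<in> X" "x \<in> set (T.gp v0 \<alpha>)" using W_spine[OF x] by blast
  obtain P R where PR: "T.gp v0 \<alpha> = P @ x # R" using a(2) by (meson split_list)
  have "T.gp v0 x = P @ [x]" using T.gp_split[OF v0C XC[OF a(1)] PR] by simp
  then have "set (path_edges (T.gp v0 x)) \<subseteq> set (path_edges (T.gp v0 \<alpha>))"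
    unfolding PR pe_append[of P x R] by simp
  moreover have "set (path_edges (T.gp v0 \<alpha>)) \<subseteq> E"
    using T.gp_path[OF v0C XC[OF a(1)]] by (simp add: is_path_def)
  ultimately show ?thesis using a(1) unfolding subE_def by blast
qed

lemma pe_W: "x \<in> W \<Longrightarrow> y \<in> W \<Longrightarrow> set (path_edges (T.gp x y)) \<subseteq> sE"
proof -
  assume x: "x \<in> W" and y: "y \<in> W"
  have xC: "x \<in> V \<union> A" and yC: "y \<in> V \<union> A" using x y W_C by auto
  have "set (path_edges (T.gp x y)) \<subseteq> set (path_edges (T.gp x v0)) \<union> set (path_edges (T.gp v0 y))"
    by (rule T.pe_tri[OF xC v0C yC])
  moreover have "set (path_edges (T.gp x v0)) = set (path_edges (T.gp v0 x))"
    using T.gp_rev[OF v0C xC] by (simp add: pe_rev)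
  ultimately show ?thesis using pe_v0_W[OF x] pe_v0_W[OF y] by blast
qed

lemma N_sV: "N \<subseteq> sV" by (auto simp: newarr_base_def)

lemma finW: "finite W" and finN: "finite N"
  using W_C N_sV T.fin_C by (auto intro: finite_subset)

lemma subtree: "is_tree W sE \<and> (\<forall>x\<in>W. \<forall>y\<in>W. gpath W sE x y = T.gp x y)"
  using tree_sub[OF tr W_C sE_E] sE_W pe_W by blast

lemma imgtree: "is_tree (Inl ` W) ((\<lambda>e. Inl ` e) ` sE)
   \<and> (\<forall>x\<in>W. \<forall>y\<in>W. gpath (Inl ` W) ((\<lambda>e. Inl ` e) ` sE) (Inl x) (Inl y) = map Inl (T.gp x y))"
proof -
  have a: "is_tree W sE" "\<forall>x\<in>W. \<forall>y\<in>W. gpath W sE x y = T.gp x y" using subtree by auto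
  have b: "is_tree (Inl ` W) ((\<lambda>e. Inl ` e) ` sE)"
    "\<forall>x\<in>W. \<forall>y\<in>W. gpath (Inl ` W) ((\<lambda>e. Inl ` e) ` sE) (Inl x) (Inl y) = map Inl (gpath W sE x y)"
    using tree_img[OF a(1), of Inl] by auto
  show ?thesis
  proof (intro conjI ballI)
    show "is_tree (Inl ` W) ((\<lambda>e. Inl ` e) ` sE)" using b(1) .
    fix x y assume xy: "x \<in> W" "y \<in> W"
    have "gpath (Inl ` W) ((\<lambda>e. Inl ` e) ` sE) (Inl x) (Inl y) = map Inl (gpath W sE x y)"
      using bspec[OF bspec[OF b(2) xy(1)] xy(2)] .
    also have "gpath W sE x y = T.gp x y" using bspec[OF bspec[OF a(2) xy(1)] xy(2)] .
    finally show "gpath (Inl ` W) ((\<lambda>e. Inl ` e) ` sE) (Inl x) (Inl y) = map Inl (T.gp x y)" .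
  qed
qed

lemma leaves:
  assumes "N' \<subseteq> N"
  shows "is_tree (Inl ` W \<union> Inr ` N') ((\<lambda>e. Inl ` e) ` sE \<union> (\<lambda>v. {Inl v, Inr v}) ` N')
   \<and> (\<forall>x\<in>W. \<forall>y\<in>W. gpath (Inl ` W \<union> Inr ` N') ((\<lambda>e. Inl ` e) ` sE \<union> (\<lambda>v. {Inl v, Inr v}) ` N')
        (Inl x) (Inl y) = map Inl (T.gp x y))"
proof -
  have "finite N'" using assms finN finite_subset by blast
  then show ?thesis using assms
  proof (induction N' rule: finite_induct)
    case empty
    then show ?case using imgtree by simp
  next
    case (insert n N')
    let ?C = "Inl ` W \<union> Inr ` N'" and ?E = "(\<lambda>e. Inl ` e) ` sE \<union> (\<lambda>v. {Inl v, Inr v}) ` N'"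
    have IH: "is_tree ?C ?E" "\<forall>x\<in>W. \<forall>y\<in>W. gpath ?C ?E (Inl x) (Inl y) = map Inl (T.gp x y)"
      using insert by auto
    have nW: "n \<in> W" using insert(4) N_sV by auto
    have vC: "Inl n \<in> ?C" using nW by simp
    have lC: "Inr n \<notin> ?C" using insert(2) by auto
    have L: "is_tree (insert (Inr n) ?C) (insert {Inl n, Inr n} ?E) \<and>
      (\<forall>x\<in>?C. \<forall>y\<in>?C. gpath (insert (Inr n) ?C) (insert {Inl n, Inr n} ?E) x y = gpath ?C ?E x y)"
      by (rule tree_leaf[OF IH(1) vC lC])
    have c: "insert (Inr n) ?C = Inl ` W \<union> Inr ` insert n N'" by auto
    have e: "insert {Inl n, Inr n} ?E = (\<lambda>e. Inl ` e) ` sE \<union> (\<lambda>v. {Inl v, Inr v}) ` insert n N'" by auto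
    show ?case using L IH(2) unfolding c e by auto
  qed
qed

lemma TX_cells: "TX_V V A E v0 X \<union> TX_A V A E q v0 X = Inl ` W \<union> Inr ` N"
  by (auto simp: TX_V_def TX_A_def)

lemma TXtree: "is_tree (TX_V V A E v0 X \<union> TX_A V A E q v0 X) (TX_E V A E q v0 X)
   \<and> (\<forall>x\<in>W. \<forall>y\<in>W. gpath (TX_V V A E v0 X \<union> TX_A V A E q v0 X) (TX_E V A E q v0 X) (Inl x) (Inl y)
        = map Inl (T.gp x y))"
  unfolding TX_cells TX_E_def using leaves[OF order_refl] by simp

end


context TXctx
begin

abbreviation "TV \<equiv> TX_V V A E v0 X"
abbreviation "TA \<equiv> TX_A V A E q v0 X"
abbreviation "TE \<equiv> TX_E V A E q v0 X"
abbreviation "Tq \<equiv> TX_q V A E q v0 X"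
abbreviation "Tf \<equiv> TX_f f"
abbreviation "gX \<equiv> gpath (TV \<union> TA) TE"

lemma TXtr: "is_tree (TV \<union> TA) TE" using TXtree by blast

lemma gX_Inl: "x \<in> W \<Longrightarrow> y \<in> W \<Longrightarrow> gX (Inl x) (Inl y) = map Inl (T.gp x y)"
  using TXtree by blast

lemma cells_W: "x \<in> W \<Longrightarrow> y \<in> W \<Longrightarrow> set (T.gp x y) \<subseteq> W"
proof -
  assume xy: "x \<in> W" "y \<in> W"
  interpret S: tree_ctx W sE using subtree by unfold_locales blast
  have "set (S.gp x y) \<subseteq> W" using S.gp_set[OF xy] .
  then show ?thesis using subtree xy by auto
qed

lemma XnotV: "\<alpha> \<in> X \<Longrightarrow> \<alpha> \<notin> V" using XA VA by auto

lemma sV_V: "sV \<subseteq> V" by (auto simp: subV_def)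

lemma N_V: "N \<subseteq> V" using N_sV sV_V by auto

lemma TE_at: "{e' \<in> TE. Inl w \<in> e'} = (\<lambda>e. Inl ` e) ` {e \<in> sE. w \<in> e}
    \<union> (if w \<in> N then {{Inl w, Inr w}} else {})"
  unfolding TX_E_def by auto

lemma TE_at_Inr: "{e' \<in> TE. Inr n \<in> e'} = (if n \<in> N then {{Inl n, Inr n}} else {})"
  unfolding TX_E_def by auto

lemma Tq_Inl: "Tq (Inl ` e) (Inl w) = q e w"
  unfolding TX_q_def by (simp add: inj_vimage_image_eq image_iff)

lemma Tq_new: "Tq {Inl w, Inr w} (Inl w) = bcoef V A E q v0 X w"
  by (simp add: TX_q_def)

lemma new_notin: "{Inl w, Inr w} \<notin> (\<lambda>e. Inl ` e) ` F"
  by auto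

lemma inj_imgInl: "inj (\<lambda>e. Inl ` e)"
  using inj_on_image_Pow[of Inl UNIV] by (simp add: inj_on_def)

lemma edge_X_sE:
  assumes a: "\<alpha> \<in> X"
  shows "{e \<in> sE. \<alpha> \<in> e} = {e \<in> E. \<alpha> \<in> e}"
proof -
  have aC: "\<alpha> \<in> V \<union> A" using XC[OF a] .
  have ne: "v0 \<noteq> \<alpha>" using v0V XnotV[OF a] by auto
  have ain: "\<alpha> \<in> set (T.gp v0 \<alpha>)" using T.gp_path[OF v0C aC] T.gp_ne[OF v0C aC] by (metis last_in_set)
  obtain e where e: "e \<in> set (path_edges (T.gp v0 \<alpha>))" "\<alpha> \<in> e"
    using T.gp_cells_in_edges[OF v0C aC ain ne] by blast
  have eE: "e \<in> E" using e(1) T.gp_path[OF v0C aC] by (auto simp: is_path_def)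
  have esE: "e \<in> sE" using e(1) eE a by (auto simp: subE_def)
  have "card {e \<in> E. \<alpha> \<in> e} = 1" using Aval XA a by (auto simp: valency_def)
  then obtain e0 where e0: "{e \<in> E. \<alpha> \<in> e} = {e0}" by (meson card_1_singletonE)
  have "e \<in> {e \<in> E. \<alpha> \<in> e}" using eE e(2) by simp
  then have "e = e0" unfolding e0 by simp
  show ?thesis
  proof
    show "{e \<in> sE. \<alpha> \<in> e} \<subseteq> {e \<in> E. \<alpha> \<in> e}" using sE_E by auto
    show "{e \<in> E. \<alpha> \<in> e} \<subseteq> {e \<in> sE. \<alpha> \<in> e}" using e0 \<open>e = e0\<close> esE e(2) by auto
  qed
qed

lemma bcoef_W: "w \<in> W \<Longrightarrow> w \<notin> N \<Longrightarrow> bcoef V A E q v0 X w = 1"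
proof -
  assume w: "w \<in> W" "w \<notin> N"
  show ?thesis
  proof (cases "w \<in> sV")
    case True then show ?thesis using w(2) by (simp add: newarr_base_def)
  next
    case False
    then have wX: "w \<in> X" using w(1) by simp
    have "{e \<in> E. w \<in> e \<and> e \<notin> sE} = {}" using edge_X_sE[OF wX] by blast
    then show ?thesis unfolding bcoef_def by (metis prod.empty)
  qed
qed

lemma PX1:
  assumes w: "w \<in> W" and F: "F \<subseteq> sE"
  shows "(\<Prod>e'\<in>{e' \<in> TE. Inl w \<in> e' \<and> e' \<notin> (\<lambda>e. Inl ` e) ` F}. Tq e' (Inl w))
       = (\<Prod>e\<in>{e \<in> E. w \<in> e \<and> e \<notin> F}. q e w)"
proof -
  let ?B = "{e \<in> sE. w \<in> e \<and> e \<notin> F}"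
  let ?New = "if w \<in> N then {{Inl w, Inr w}} else {}"
  have fsE: "finite sE" using sE_E T.fin_E finite_subset by blast
  have set: "{e' \<in> TE. Inl w \<in> e' \<and> e' \<notin> (\<lambda>e. Inl ` e) ` F} = (\<lambda>e. Inl ` e) ` ?B \<union> ?New"
  proof -
    have "{e' \<in> TE. Inl w \<in> e' \<and> e' \<notin> (\<lambda>e. Inl ` e) ` F}
        = {e' \<in> {e' \<in> TE. Inl w \<in> e'}. e' \<notin> (\<lambda>e. Inl ` e) ` F}" by blast
    also have "\<dots> = (\<lambda>e. Inl ` e) ` ?B \<union> ?New"
      unfolding TE_at using inj_imgInl new_notin[of w F] by (auto simp: inj_image_mem_iff inj_image_eq_iff[OF inj_Inl])
    finally show ?thesis .
  qed
  have disj: "(\<lambda>e. Inl ` e) ` ?B \<inter> ?New = {}" by auto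
  have "(\<Prod>e'\<in>(\<lambda>e. Inl ` e) ` ?B \<union> ?New. Tq e' (Inl w))
      = (\<Prod>e'\<in>(\<lambda>e. Inl ` e) ` ?B. Tq e' (Inl w)) * (\<Prod>e'\<in>?New. Tq e' (Inl w))"
    by (rule prod.union_disjoint) (use fsE disj in auto)
  also have "(\<Prod>e'\<in>(\<lambda>e. Inl ` e) ` ?B. Tq e' (Inl w)) = (\<Prod>e\<in>?B. q e w)"
  proof -
    have injB: "inj_on (\<lambda>e. Inl ` e) ?B" by (rule inj_onI) (simp add: inj_image_eq_iff[OF inj_Inl])
    have "(\<Prod>e'\<in>(\<lambda>e. Inl ` e) ` ?B. Tq e' (Inl w)) = (\<Prod>e\<in>?B. Tq (Inl ` e) (Inl w))"
      using prod.reindex[OF injB] by (simp add: comp_def)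
    then show ?thesis using Tq_Inl by simp
  qed
  also have "(\<Prod>e'\<in>?New. Tq e' (Inl w)) = bcoef V A E q v0 X w"
    using Tq_new bcoef_W[OF w] by auto
  also have "bcoef V A E q v0 X w = (\<Prod>e\<in>{e \<in> E. w \<in> e \<and> e \<notin> sE}. q e w)" by (simp add: bcoef_def)
  also have "(\<Prod>e\<in>?B. q e w) * (\<Prod>e\<in>{e \<in> E. w \<in> e \<and> e \<notin> sE}. q e w)
      = (\<Prod>e\<in>{e \<in> E. w \<in> e \<and> e \<notin> F}. q e w)"
  proof -
    have u: "{e \<in> E. w \<in> e \<and> e \<notin> F} = ?B \<union> {e \<in> E. w \<in> e \<and> e \<notin> sE}" using F sE_E by auto
    show ?thesis unfolding u by (rule prod.union_disjoint[symmetric]) (use fsE T.fin_E in auto)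
  qed
  finally show ?thesis unfolding set .
qed

lemma PX2:
  assumes F: "F \<subseteq> sE"
  shows "(\<Prod>e'\<in>{e' \<in> TE. Inl w \<in> e' \<and> e' \<in> (\<lambda>e. Inl ` e) ` F}. Tq e' (Inl w))
       = (\<Prod>e\<in>{e \<in> E. w \<in> e \<and> e \<in> F}. q e w)"
proof -
  have set: "{e' \<in> TE. Inl w \<in> e' \<and> e' \<in> (\<lambda>e. Inl ` e) ` F} = (\<lambda>e. Inl ` e) ` {e \<in> E. w \<in> e \<and> e \<in> F}"
  proof -
    have "{e' \<in> TE. Inl w \<in> e' \<and> e' \<in> (\<lambda>e. Inl ` e) ` F}
        = {e' \<in> {e' \<in> TE. Inl w \<in> e'}. e' \<in> (\<lambda>e. Inl ` e) ` F}" by blast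
    also have "\<dots> = (\<lambda>e. Inl ` e) ` {e \<in> E. w \<in> e \<and> e \<in> F}"
      unfolding TE_at using inj_imgInl new_notin[of w F] F sE_E by (auto simp: inj_image_mem_iff inj_image_eq_iff[OF inj_Inl])
    finally show ?thesis .
  qed
  have injB: "inj_on (\<lambda>e. Inl ` e) {e \<in> E. w \<in> e \<and> e \<in> F}" by (rule inj_onI) (simp add: inj_image_eq_iff[OF inj_Inl])
  have "(\<Prod>e'\<in>(\<lambda>e. Inl ` e) ` {e \<in> E. w \<in> e \<and> e \<in> F}. Tq e' (Inl w))
      = (\<Prod>e\<in>{e \<in> E. w \<in> e \<and> e \<in> F}. Tq (Inl ` e) (Inl w))"
    using prod.reindex[OF injB] by (simp add: comp_def)
  then show ?thesis unfolding set using Tq_Inl by simp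
qed

lemma Qcell_TX:
  assumes w: "w \<in> W" and g: "set (path_edges \<gamma>) \<subseteq> sE"
  shows "Qcell TE Tq (map Inl \<gamma>) (Inl w) = Qcell E q \<gamma> w"
proof -
  have "set (path_edges (map Inl \<gamma> :: ('a + 'a) list)) = (\<lambda>e. Inl ` e) ` set (path_edges \<gamma>)" by (simp add: pe_map)
  then show ?thesis unfolding Qcell_def using PX1[OF w g] by simp
qed

end


context TXctx
begin

lemma TVA: "TV \<inter> TA = {}"
  using sV_V XA VA by (auto simp: TX_V_def TX_A_def)

lemma TA_val: "\<forall>a\<in>TA. valency TE a = 1"
proof
  fix a assume "a \<in> TA"
  then consider (l) \<alpha> where "\<alpha> \<in> X" "a = Inl \<alpha>" | (r) n where "n \<in> N" "a = Inr n"
    by (auto simp: TX_A_def)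
  then show "valency TE a = 1"
  proof cases
    case l
    have "\<alpha> \<notin> N" using N_V XnotV[OF l(1)] by auto
    then have "{e' \<in> TE. Inl \<alpha> \<in> e'} = (\<lambda>e. Inl ` e) ` {e \<in> E. \<alpha> \<in> e}"
      unfolding TE_at edge_X_sE[OF l(1)] by simp
    moreover have "inj_on (\<lambda>e. Inl ` e :: ('a + 'a) set) {e \<in> E. \<alpha> \<in> e}"
      by (rule inj_onI) (simp add: inj_image_eq_iff[OF inj_Inl])
    moreover have "card {e \<in> E. \<alpha> \<in> e} = 1" using Aval XA l(1) by (auto simp: valency_def)
    ultimately show ?thesis using l(2) by (simp add: valency_def card_image)
  next
    case r
    then show ?thesis using TE_at_Inr[of n] by (simp add: valency_def)
  qed
qed

lemma zero_TA: "TA - zero_arrows TA Tf = Inl ` X"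
  using XA1 by (auto simp: TX_A_def zero_arrows_def TX_f_def)

lemma v0sV: "v0 \<in> sV"
proof -
  obtain \<alpha> where a: "\<alpha> \<in> X" using Xne by blast
  have "v0 \<in> set (T.gp v0 \<alpha>)" using T.gp_path[OF v0C XC[OF a]] T.gp_ne[OF v0C XC[OF a]] by (metis hd_in_set)
  then show ?thesis using a v0V by (auto simp: subV_def)
qed

lemma v0N: "v0 \<notin> N"
proof -
  have "bcoef V A E q v0 X v0 = 1" unfolding bcoef_def using q0 by (intro prod.neutral) auto
  then show ?thesis by (simp add: newarr_base_def)
qed

lemma TXpr: "pseudo_root TV TA TE Tq (Inl v0)"
  unfolding pseudo_root_def
proof (intro conjI ballI impI)
  show "Inl v0 \<in> TV" using v0sV by (simp add: TX_V_def)
next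
  fix e' assume e': "e' \<in> TE" "Inl v0 \<in> e'"
  then have "e' \<in> {e' \<in> TE. Inl v0 \<in> e'}" by simp
  then obtain e where e: "e \<in> sE" "v0 \<in> e" "e' = Inl ` e"
    unfolding TE_at using v0N by auto
  show "Tq e' (Inl v0) = 1" using e Tq_Inl q0 sE_E by auto
next
  fix v' assume v': "v' \<in> TV - {Inl v0}"
  then obtain u where u: "u \<in> sV" "v' = Inl u" "u \<noteq> v0" by (auto simp: TX_V_def)
  have uW: "u \<in> W" and v0W: "v0 \<in> W" using u v0sV by auto
  have uV: "u \<in> V - {v0}" using u sV_V by auto
  let ?F = "set (path_edges (T.gp v0 u))"
  have F: "?F \<subseteq> sE" using pe_v0_W[OF uW] .
  have gpe: "set (path_edges (gX (Inl v0) (Inl u))) = (\<lambda>e. Inl ` e) ` ?F"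
    using gX_Inl[OF v0W uW] by (simp add: pe_map)
  let ?S = "{e \<in> E. u \<in> e \<and> e \<notin> ?F \<and> q e u \<noteq> 1}"
  have cS: "card ?S \<le> 1" using pr uV unfolding pseudo_root_def by auto
  have fS: "finite ?S" using T.fin_E by simp
  let ?S' = "{e' \<in> TE. v' \<in> e' \<and> e' \<notin> set (path_edges (gX (Inl v0) v')) \<and> Tq e' v' \<noteq> 1}"
  have S'eq: "?S' = (\<lambda>e. Inl ` e) ` {e \<in> sE. u \<in> e \<and> e \<notin> ?F \<and> q e u \<noteq> 1}
      \<union> (if u \<in> N then {{Inl u, Inr u}} else {})"
  proof -
    have "?S' = {e' \<in> {e' \<in> TE. Inl u \<in> e'}. e' \<notin> (\<lambda>e. Inl ` e) ` ?F \<and> Tq e' (Inl u) \<noteq> 1}"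
      unfolding u(2) gpe by blast
    also have "\<dots> = (\<lambda>e. Inl ` e) ` {e \<in> sE. u \<in> e \<and> e \<notin> ?F \<and> q e u \<noteq> 1}
      \<union> (if u \<in> N then {{Inl u, Inr u}} else {})"
      unfolding TE_at using Tq_Inl Tq_new new_notin[of u ?F]
      by (auto simp: inj_image_mem_iff inj_image_eq_iff[OF inj_Inl] newarr_base_def)
    finally show ?thesis .
  qed
  show "card ?S' \<le> 1"
  proof (cases "u \<in> N")
    case True
    then have "bcoef V A E q v0 X u \<noteq> 1" by (simp add: newarr_base_def)
    then obtain e0 where e0: "e0 \<in> E" "u \<in> e0" "e0 \<notin> sE" "q e0 u \<noteq> 1"
      unfolding bcoef_def by (metis (mono_tags, lifting) mem_Collect_eq prod.neutral)
    have e0S: "e0 \<in> ?S" using e0 F by auto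
    have all: "\<forall>a\<in>?S. \<forall>b\<in>?S. a = b" using card_le_Suc0_iff_eq[OF fS] cS by simp
    have emp: "{e \<in> sE. u \<in> e \<and> e \<notin> ?F \<and> q e u \<noteq> 1} = {}"
    proof (rule ccontr)
      assume "{e \<in> sE. u \<in> e \<and> e \<notin> ?F \<and> q e u \<noteq> 1} \<noteq> {}"
      then obtain e where e: "e \<in> sE" "u \<in> e" "e \<notin> ?F" "q e u \<noteq> 1" by blast
      then have "e \<in> ?S" using sE_E by auto
      then have "e = e0" using bspec[OF bspec[OF all e0S]] by simp
      then show False using e(1) e0(3) by simp
    qed
    show ?thesis unfolding S'eq emp using True by simp
  next
    case False
    have "card ((\<lambda>e. Inl ` e :: ('a + 'a) set) ` {e \<in> sE. u \<in> e \<and> e \<notin> ?F \<and> q e u \<noteq> 1}) \<le> card {e \<in> sE. u \<in> e \<and> e \<notin> ?F \<and> q e u \<noteq> 1}"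
      by (rule card_image_le, rule finite_subset[OF _ finite_subset[OF sE_E T.fin_E]]) blast
    also have "\<dots> \<le> card ?S" by (rule card_mono[OF fS]) (use sE_E in auto)
    finally show ?thesis unfolding S'eq using False cS by simp
  qed
qed

end


context TXctx
begin

lemma XW: "X \<subseteq> W" by auto

lemma mval_eq:
  assumes a: "\<alpha> \<in> X"
  shows "mval (TV \<union> TA) TE Tq (Inl \<alpha>) = mval (V \<union> A) E q \<alpha>"
proof -
  have aC: "\<alpha> \<in> V \<union> A" using XC[OF a] .
  have aA: "\<alpha> \<in> A" using XA a by auto
  have aW: "\<alpha> \<in> W" using a by simp
  have v0W: "v0 \<in> W" using v0sV by simp
  interpret AT: arrow_ctx "V \<union> A" E \<alpha>
    by unfold_locales (use aC Aval aA in auto)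
  have aTA: "Inl \<alpha> \<in> TA" using a by (simp add: TX_A_def)
  interpret AX: arrow_ctx "TV \<union> TA" TE "Inl \<alpha>"
    using TXtr by unfold_locales (use aTA TA_val in auto)
  have GT: "mval (V \<union> A) E q \<alpha> = 1 + (\<Sum>u\<in>set (T.gp v0 \<alpha>) - {v0, \<alpha>}. AT.Yv q u
     * ((\<Prod>e\<in>{e \<in> E. u \<in> e \<and> e \<notin> set (path_edges (T.gp v0 \<alpha>))}. q e u) - 1)
     * (1 - (\<Prod>e\<in>{e \<in> E. u \<in> e \<and> e \<in> set (path_edges (T.gp v0 u))}. q e u)))"
    by (rule AT.G[OF refl VA aA Aval pr])
  have GX: "mval (TV \<union> TA) TE Tq (Inl \<alpha>) = 1 + (\<Sum>u\<in>set (gX (Inl v0) (Inl \<alpha>)) - {Inl v0, Inl \<alpha>}. AX.Yv Tq u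
     * ((\<Prod>e\<in>{e \<in> TE. u \<in> e \<and> e \<notin> set (path_edges (gX (Inl v0) (Inl \<alpha>)))}. Tq e u) - 1)
     * (1 - (\<Prod>e\<in>{e \<in> TE. u \<in> e \<and> e \<in> set (path_edges (gX (Inl v0) u))}. Tq e u)))"
    by (rule AX.G[OF refl TVA aTA TA_val TXpr])
  have sp: "set (gX (Inl v0) (Inl \<alpha>)) - {Inl v0, Inl \<alpha>} = Inl ` (set (T.gp v0 \<alpha>) - {v0, \<alpha>})"
    using gX_Inl[OF v0W aW] by auto
  have injS: "inj_on Inl (set (T.gp v0 \<alpha>) - {v0, \<alpha>})" by (simp add: inj_on_def)
  have trm: "AX.Yv Tq (Inl u)
     * ((\<Prod>e\<in>{e \<in> TE. Inl u \<in> e \<and> e \<notin> set (path_edges (gX (Inl v0) (Inl \<alpha>)))}. Tq e (Inl u)) - 1)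
     * (1 - (\<Prod>e\<in>{e \<in> TE. Inl u \<in> e \<and> e \<in> set (path_edges (gX (Inl v0) (Inl u)))}. Tq e (Inl u)))
     = AT.Yv q u
     * ((\<Prod>e\<in>{e \<in> E. u \<in> e \<and> e \<notin> set (path_edges (T.gp v0 \<alpha>))}. q e u) - 1)
     * (1 - (\<Prod>e\<in>{e \<in> E. u \<in> e \<and> e \<in> set (path_edges (T.gp v0 u))}. q e u))"
    if u: "u \<in> set (T.gp v0 \<alpha>) - {v0, \<alpha>}" for u
  proof -
    have uW: "u \<in> W" using u spine_W[OF a] by auto
    have Y: "AX.Yv Tq (Inl u) = AT.Yv q u"
    proof -
      have g: "gX (Inl u) (Inl \<alpha>) = map Inl (T.gp u \<alpha>)" using gX_Inl[OF uW aW] .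
      have s: "set (map Inl (T.gp u \<alpha>) :: ('a + 'a) list) - {Inl u} = Inl ` (set (T.gp u \<alpha>) - {u})" by auto
      have inj: "inj_on Inl (set (T.gp u \<alpha>) - {u})" by (simp add: inj_on_def)
      have "AX.Yv Tq (Inl u) = (\<Prod>z\<in>Inl ` (set (T.gp u \<alpha>) - {u}). Qcell TE Tq (map Inl (T.gp u \<alpha>)) z)"
        unfolding AX.Yv_def g s ..
      also have "\<dots> = (\<Prod>z\<in>set (T.gp u \<alpha>) - {u}. Qcell TE Tq (map Inl (T.gp u \<alpha>)) (Inl z))"
        using prod.reindex[OF inj] by (simp add: comp_def)
      also have "\<dots> = (\<Prod>z\<in>set (T.gp u \<alpha>) - {u}. Qcell E q (T.gp u \<alpha>) z)"
      proof (rule prod.cong[OF refl])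
        fix z assume "z \<in> set (T.gp u \<alpha>) - {u}"
        then have "z \<in> W" using cells_W[OF uW aW] by auto
        then show "Qcell TE Tq (map Inl (T.gp u \<alpha>)) (Inl z) = Qcell E q (T.gp u \<alpha>) z"
          using Qcell_TX pe_W[OF uW aW] by blast
      qed
      also have "\<dots> = AT.Yv q u" unfolding AT.Yv_def ..
      finally show ?thesis .
    qed
    have B: "(\<Prod>e\<in>{e \<in> TE. Inl u \<in> e \<and> e \<notin> set (path_edges (gX (Inl v0) (Inl \<alpha>)))}. Tq e (Inl u))
        = (\<Prod>e\<in>{e \<in> E. u \<in> e \<and> e \<notin> set (path_edges (T.gp v0 \<alpha>))}. q e u)"
    proof -
      have "set (path_edges (gX (Inl v0) (Inl \<alpha>))) = (\<lambda>e. Inl ` e) ` set (path_edges (T.gp v0 \<alpha>))"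
        using gX_Inl[OF v0W aW] by (simp add: pe_map)
      then show ?thesis using PX1[OF uW pe_W[OF v0W aW]] by simp
    qed
    have P: "(\<Prod>e\<in>{e \<in> TE. Inl u \<in> e \<and> e \<in> set (path_edges (gX (Inl v0) (Inl u)))}. Tq e (Inl u))
        = (\<Prod>e\<in>{e \<in> E. u \<in> e \<and> e \<in> set (path_edges (T.gp v0 u))}. q e u)"
    proof -
      have "set (path_edges (gX (Inl v0) (Inl u))) = (\<lambda>e. Inl ` e) ` set (path_edges (T.gp v0 u))"
        using gX_Inl[OF v0W uW] by (simp add: pe_map)
      then show ?thesis using PX2[OF pe_W[OF v0W uW]] by simp
    qed
    show ?thesis unfolding Y B P ..
  qed
  have "(\<Sum>u\<in>set (gX (Inl v0) (Inl \<alpha>)) - {Inl v0, Inl \<alpha>}. AX.Yv Tq u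
     * ((\<Prod>e\<in>{e \<in> TE. u \<in> e \<and> e \<notin> set (path_edges (gX (Inl v0) (Inl \<alpha>)))}. Tq e u) - 1)
     * (1 - (\<Prod>e\<in>{e \<in> TE. u \<in> e \<and> e \<in> set (path_edges (gX (Inl v0) u))}. Tq e u)))
     = (\<Sum>u\<in>set (T.gp v0 \<alpha>) - {v0, \<alpha>}. AX.Yv Tq (Inl u)
     * ((\<Prod>e\<in>{e \<in> TE. Inl u \<in> e \<and> e \<notin> set (path_edges (gX (Inl v0) (Inl \<alpha>)))}. Tq e (Inl u)) - 1)
     * (1 - (\<Prod>e\<in>{e \<in> TE. Inl u \<in> e \<and> e \<in> set (path_edges (gX (Inl v0) (Inl u)))}. Tq e (Inl u))))"
    unfolding sp using sum.reindex[OF injS] by (simp add: comp_def)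
  also have "\<dots> = (\<Sum>u\<in>set (T.gp v0 \<alpha>) - {v0, \<alpha>}. AT.Yv q u
     * ((\<Prod>e\<in>{e \<in> E. u \<in> e \<and> e \<notin> set (path_edges (T.gp v0 \<alpha>))}. q e u) - 1)
     * (1 - (\<Prod>e\<in>{e \<in> E. u \<in> e \<and> e \<in> set (path_edges (T.gp v0 u))}. q e u)))"
    using trm by (rule sum.cong[OF refl])
  finally show ?thesis unfolding GX GT by simp
qed

lemma Qstar_eq:
  assumes a: "a \<in> W" and b: "b \<in> W"
  shows "Qstar TE Tq (gX (Inl a) (Inl b)) = Qstar E q (T.gp a b)"
proof -
  have g: "gX (Inl a) (Inl b) = map Inl (T.gp a b)" using gX_Inl[OF a b] .
  show ?thesis unfolding g Qstar_def
  proof (rule prod.cong)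
    show "{0<..<length (map Inl (T.gp a b)) - 1} = {0<..<length (T.gp a b) - 1}" by simp
  next
    fix i assume i: "i \<in> {0<..<length (T.gp a b) - 1}"
    then have il: "i < length (T.gp a b)" by auto
    have "T.gp a b ! i \<in> W" using cells_W[OF a b] il nth_mem by blast
    then show "Qcell TE Tq (map Inl (T.gp a b)) (map Inl (T.gp a b) ! i) = Qcell E q (T.gp a b) (T.gp a b ! i)"
      using Qcell_TX pe_W[OF a b] il by simp
  qed
qed

lemma Iform_eq:
  "Iform TV TA TE Tf Tq (Inl ` X) (Inl ` X) = Iform V A E f q X X"
proof -
  have s: "{(a', b') \<in> Inl ` X \<times> Inl ` X. a' \<noteq> b'} = map_prod Inl Inl ` {(a, b) \<in> X \<times> X. a \<noteq> b}"
    by auto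
  have inj: "inj_on (map_prod Inl Inl) {(a, b) \<in> X \<times> X. a \<noteq> b}"
    by (auto simp: inj_on_def)
  have "Iform TV TA TE Tf Tq (Inl ` X) (Inl ` X)
      = (\<Sum>(a, b)\<in>{(a, b) \<in> X \<times> X. a \<noteq> b}. Qstar TE Tq (gX (Inl a) (Inl b)) * Tf (Inl a) * Tf (Inl b))"
    unfolding Iform_def by (rule sum.reindex_cong[OF inj s]) auto
  also have "\<dots> = (\<Sum>(a, b)\<in>{(a, b) \<in> X \<times> X. a \<noteq> b}. Qstar E q (T.gp a b) * f a * f b)"
    using Qstar_eq XW by (intro sum.cong refl) (auto simp: TX_f_def)
  finally show ?thesis unfolding Iform_def .
qed

lemma M_sub_formula:
  assumes f1: "\<forall>\<alpha>\<in>A - zero_arrows A f. f \<alpha> = 1"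
  shows "M_sub V A E f q v0 X = (\<Sum>\<alpha>\<in>X. mval (V \<union> A) E q \<alpha>) - Iform V A E f q X X"
proof -
  have f1': "\<forall>a\<in>TA - zero_arrows TA Tf. Tf a = 1"
    unfolding zero_TA using f1 XA1 by (auto simp: TX_f_def)
  have "M_sub V A E f q v0 X = Mval TV TA TE Tf Tq" by (simp add: M_sub_def)
  also have "\<dots> = (\<Sum>a\<in>TA - zero_arrows TA Tf. mval (TV \<union> TA) TE Tq a)
     - Iform TV TA TE Tf Tq (TA - zero_arrows TA Tf) (TA - zero_arrows TA Tf)"
    by (rule MDecomp[OF TXtr TVA TA_val f1'])
  also have "(\<Sum>a\<in>TA - zero_arrows TA Tf. mval (TV \<union> TA) TE Tq a) = (\<Sum>\<alpha>\<in>X. mval (V \<union> A) E q \<alpha>)"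
  proof -
    have inj: "inj_on Inl X" by (simp add: inj_on_def)
    have "(\<Sum>a\<in>Inl ` X. mval (TV \<union> TA) TE Tq a) = (\<Sum>\<alpha>\<in>X. mval (TV \<union> TA) TE Tq (Inl \<alpha>))"
      using sum.reindex[OF inj] by (simp add: comp_def)
    also have "\<dots> = (\<Sum>\<alpha>\<in>X. mval (V \<union> A) E q \<alpha>)" using mval_eq by (rule sum.cong[OF refl])
    finally show ?thesis unfolding zero_TA .
  qed
  finally show ?thesis unfolding zero_TA Iform_eq .
qed

end


lemma part_sum:
  fixes g :: "'a \<Rightarrow> int"
  assumes "partition_on S P" "finite S"
  shows "(\<Sum>X\<in>P. \<Sum>a\<in>X. g a) = (\<Sum>a\<in>S. g a)"
proof -
  have fin: "\<forall>X\<in>P. finite X" using assms partition_onD1[OF assms(1)] by (metis Union_upper finite_subset)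
  have dis: "\<forall>X\<in>P. \<forall>Y\<in>P. X \<noteq> Y \<longrightarrow> X \<inter> Y = {}"
    using partition_onD2[OF assms(1)] unfolding disjoint_def by blast
  have "(\<Sum>a\<in>\<Union>P. g a) = (\<Sum>X\<in>P. \<Sum>a\<in>X. g a)"
    using sum.Union_disjoint[OF fin dis] by (simp add: comp_def)
  then show ?thesis using partition_onD1[OF assms(1)] by simp
qed

lemma Iform_bil:
  assumes "finite X" "finite Y"
  shows "Iform V A E f q X Y = (\<Sum>a\<in>X. \<Sum>b\<in>Y. if a \<noteq> b then Qstar E q (gpath (V \<union> A) E a b) * f a * f b else 0)"
proof -
  let ?k = "\<lambda>a b. Qstar E q (gpath (V \<union> A) E a b) * f a * f b"
  have "Iform V A E f q X Y = (\<Sum>p\<in>{p \<in> X \<times> Y. fst p \<noteq> snd p}. ?k (fst p) (snd p))"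
    unfolding Iform_def by (rule sum.cong) auto
  also have "\<dots> = (\<Sum>p\<in>X \<times> Y. if fst p \<noteq> snd p then ?k (fst p) (snd p) else 0)"
    using assms by (simp add: sum.If_cases Int_def conj_commute)
  also have "\<dots> = (\<Sum>a\<in>X. \<Sum>b\<in>Y. if a \<noteq> b then ?k a b else 0)"
    by (simp add: sum.cartesian_product case_prod_beta)
  finally show ?thesis .
qed

theorem proposition4p12:
  fixes V A :: "'a set" and E :: "'a set set" and f :: "'a \<Rightarrow> int"
    and q :: "'a set \<Rightarrow> 'a \<Rightarrow> int" and v0 :: 'a and P :: "'a set set"
  assumes "decorated_pseudo_rooted_tree V A E f q v0"
    and "\<forall>\<alpha>\<in>A - zero_arrows A f. f \<alpha> = 1"
    and "partition_on (A - zero_arrows A f) P"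
  shows "Mval V A E f q =
           (\<Sum>\<alpha>\<in>A - zero_arrows A f. M_sub V A E f q v0 {\<alpha>})
           - Iform V A E f q (A - zero_arrows A f) (A - zero_arrows A f)
         \<and> Mval V A E f q =
           (\<Sum>X\<in>P. M_sub V A E f q v0 X)
           - (\<Sum>(X, Y)\<in>{(X, Y) \<in> P \<times> P. X \<noteq> Y}. Iform V A E f q X Y)"
proof -
  let ?A1 = "A - zero_arrows A f"
  let ?m = "mval (V \<union> A) E q"
  let ?I = "Iform V A E f q"
  have dt: "decorated_tree V A E f q" using assms(1) by (simp add: decorated_pseudo_rooted_tree_def)
  have tr: "is_tree (V \<union> A) E" and VA: "V \<inter> A = {}" and Aval: "\<forall>a\<in>A. valency E a = 1"
    and finA: "finite A"
    using dt by (auto simp: decorated_tree_def)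
  have finA1: "finite ?A1" using finA by simp
  have MD: "Mval V A E f q = (\<Sum>\<alpha>\<in>?A1. ?m \<alpha>) - ?I ?A1 ?A1"
    by (rule MDecomp[OF tr VA Aval assms(2)])
  have Ms: "M_sub V A E f q v0 X = (\<Sum>\<alpha>\<in>X. ?m \<alpha>) - ?I X X" if "X \<subseteq> ?A1" "X \<noteq> {}" for X
  proof -
    interpret TXctx V A E f q v0 X by unfold_locales (use assms(1) that in auto)
    show ?thesis by (rule M_sub_formula[OF assms(2)])
  qed
  have partA: ?thesis if "P = P"
  proof -
    have a: "Mval V A E f q = (\<Sum>\<alpha>\<in>?A1. M_sub V A E f q v0 {\<alpha>}) - ?I ?A1 ?A1"
    proof -
      have "M_sub V A E f q v0 {\<alpha>} = ?m \<alpha>" if "\<alpha> \<in> ?A1" for \<alpha>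
      proof -
        have e: "{(a', b). a' = \<alpha> \<and> b = \<alpha> \<and> a' \<noteq> b} = {}" by auto
        have "?I {\<alpha>} {\<alpha>} = 0" unfolding Iform_def by (simp add: e)
        then show ?thesis using Ms[of "{\<alpha>}"] that by simp
      qed
      then show ?thesis unfolding MD by simp
    qed
    have P1: "\<Union>P = ?A1" using partition_onD1[OF assms(3)] by simp
    have finP: "finite P" using finite_elements[OF finA1 assms(3)] .
    have Psub: "X \<subseteq> ?A1" "X \<noteq> {}" if "X \<in> P" for X
      using that P1 partition_onD3[OF assms(3)] by auto
    have finX: "finite X" if "X \<in> P" for X using Psub[OF that] finA1 finite_subset by blast
    have s1: "(\<Sum>X\<in>P. M_sub V A E f q v0 X) = (\<Sum>\<alpha>\<in>?A1. ?m \<alpha>) - (\<Sum>X\<in>P. ?I X X)"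
    proof -
      have "(\<Sum>X\<in>P. M_sub V A E f q v0 X) = (\<Sum>X\<in>P. (\<Sum>\<alpha>\<in>X. ?m \<alpha>) - ?I X X)"
        using Ms Psub by (intro sum.cong) auto
      also have "\<dots> = (\<Sum>X\<in>P. \<Sum>\<alpha>\<in>X. ?m \<alpha>) - (\<Sum>X\<in>P. ?I X X)" by (simp add: sum_subtractf)
      also have "(\<Sum>X\<in>P. \<Sum>\<alpha>\<in>X. ?m \<alpha>) = (\<Sum>\<alpha>\<in>?A1. ?m \<alpha>)" by (rule part_sum[OF assms(3) finA1])
      finally show ?thesis .
    qed
    let ?k = "\<lambda>a b. if a \<noteq> b then Qstar E q (gpath (V \<union> A) E a b) * f a * f b else 0"
    have lin1: "(\<Sum>X\<in>P. ?I X Y) = ?I ?A1 Y" if Y: "finite Y" for Y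
    proof -
      have "(\<Sum>X\<in>P. ?I X Y) = (\<Sum>X\<in>P. \<Sum>a\<in>X. \<Sum>b\<in>Y. ?k a b)"
      proof (rule sum.cong[OF refl])
        fix X assume "X \<in> P"
        show "?I X Y = (\<Sum>a\<in>X. \<Sum>b\<in>Y. ?k a b)" using Iform_bil[OF finX[OF \<open>X \<in> P\<close>] Y] .
      qed
      also have "\<dots> = (\<Sum>a\<in>?A1. \<Sum>b\<in>Y. ?k a b)" by (rule part_sum[OF assms(3) finA1])
      also have "\<dots> = ?I ?A1 Y" using Iform_bil[OF finA1 Y] by simp
      finally show ?thesis .
    qed
    have lin2: "(\<Sum>Y\<in>P. ?I ?A1 Y) = ?I ?A1 ?A1"
    proof -
      have "(\<Sum>Y\<in>P. ?I ?A1 Y) = (\<Sum>Y\<in>P. \<Sum>a\<in>?A1. \<Sum>b\<in>Y. ?k a b)"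
      proof (rule sum.cong[OF refl])
        fix Y assume "Y \<in> P"
        show "?I ?A1 Y = (\<Sum>a\<in>?A1. \<Sum>b\<in>Y. ?k a b)" using Iform_bil[OF finA1 finX[OF \<open>Y \<in> P\<close>]] .
      qed
      also have "\<dots> = (\<Sum>Y\<in>P. \<Sum>b\<in>Y. \<Sum>a\<in>?A1. ?k a b)"
      proof (rule sum.cong[OF refl])
        fix Y assume "Y \<in> P"
        show "(\<Sum>a\<in>?A1. \<Sum>b\<in>Y. ?k a b) = (\<Sum>b\<in>Y. \<Sum>a\<in>?A1. ?k a b)" by (rule sum.swap)
      qed
      also have "\<dots> = (\<Sum>b\<in>?A1. \<Sum>a\<in>?A1. ?k a b)" by (rule part_sum[OF assms(3) finA1])
      also have "\<dots> = (\<Sum>a\<in>?A1. \<Sum>b\<in>?A1. ?k a b)" by (rule sum.swap)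
      also have "\<dots> = ?I ?A1 ?A1" using Iform_bil[OF finA1 finA1] by simp
      finally show ?thesis .
    qed
    have off: "(\<Sum>(X, Y)\<in>{(X, Y) \<in> P \<times> P. X \<noteq> Y}. ?I X Y) = ?I ?A1 ?A1 - (\<Sum>X\<in>P. ?I X X)"
    proof -
      have "(\<Sum>(X, Y)\<in>{(X, Y) \<in> P \<times> P. X \<noteq> Y}. ?I X Y) = (\<Sum>Y\<in>P. \<Sum>X\<in>P - {Y}. ?I X Y)"
        by (rule pairs_sum[OF finP])
      also have "\<dots> = (\<Sum>Y\<in>P. (\<Sum>X\<in>P. ?I X Y) - ?I Y Y)"
        using finP by (intro sum.cong refl) (simp add: sum_diff1)
      also have "\<dots> = (\<Sum>Y\<in>P. ?I ?A1 Y - ?I Y Y)"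
        using lin1 finX by (intro sum.cong) auto
      also have "\<dots> = ?I ?A1 ?A1 - (\<Sum>X\<in>P. ?I X X)"
        using lin2 by (simp add: sum_subtractf)
      finally show ?thesis .
    qed
    have b: "Mval V A E f q = (\<Sum>X\<in>P. M_sub V A E f q v0 X)
           - (\<Sum>(X, Y)\<in>{(X, Y) \<in> P \<times> P. X \<noteq> Y}. ?I X Y)"
      unfolding MD s1 off by simp
    show ?thesis using a b by blast
  qed
  show ?thesis using partA by simp
qed

end
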